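(* The structures $\mathcal C_3(\overline{\mathbb C}_{\mathbb C})$ and $\mathcal C(\overline{\mathbb C}_{\mathbb C})$ define the same sets.
   Context: $\mathcal C_3(\overline{\mathbb C}_{\mathbb C})$ is the structure with universe $\mathbb C$ whose basic relations are all subsets of $\mathbb C^k$, $k\le 3$, definable with parameters in the field $(\mathbb C;+,\cdot)$ and of dimension $\le1$; $\mathcal C(\overline{\mathbb C}_{\mathbb C})$ is the structure with universe $\mathbb C$ whose basic relations are all such subsets of $\mathbb C^k$ for all $k\in\mathbb N$. Dimension is the algebraic-closure dimension in the complex field. "Define the same sets" means that for every $m$, a subset of $\mathbb C^m$ is definable (allowing quantifiers) in one structure iff it is definable in the other. *)

theory Defs
  imports Complex_Main "HOL-Computational_Algebra.Polynomial"
begin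

datatype fterm = FVar nat | FConst complex | FAdd fterm fterm | FMul fterm fterm

datatype ffml = FEq fterm fterm | FNot ffml | FAnd ffml ffml | FEx nat ffml

primrec teval :: "(nat \<Rightarrow> complex) \<Rightarrow> fterm \<Rightarrow> complex" where
  "teval e (FVar i) = e i"
| "teval e (FConst c) = c"
| "teval e (FAdd s t) = teval e s + teval e t"
| "teval e (FMul s t) = teval e s * teval e t"

primrec fsat :: "(nat \<Rightarrow> complex) \<Rightarrow> ffml \<Rightarrow> bool" where
  "fsat e (FEq s t) = (teval e s = teval e t)"
| "fsat e (FNot p) = (\<not> fsat e p)"
| "fsat e (FAnd p q) = (fsat e p \<and> fsat e q)"
| "fsat e (FEx n p) = (\<exists>a. fsat (e(n := a)) p)"

primrec tparams :: "fterm \<Rightarrow> complex set" where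
  "tparams (FVar i) = {}"
| "tparams (FConst c) = {c}"
| "tparams (FAdd s t) = tparams s \<union> tparams t"
| "tparams (FMul s t) = tparams s \<union> tparams t"

primrec fparams :: "ffml \<Rightarrow> complex set" where
  "fparams (FEq s t) = tparams s \<union> tparams t"
| "fparams (FNot p) = fparams p"
| "fparams (FAnd p q) = fparams p \<union> fparams q"
| "fparams (FEx n p) = fparams p"

definition tuple_env :: "complex list \<Rightarrow> nat \<Rightarrow> complex" where
  "tuple_env xs = (\<lambda>i. if i < length xs then xs ! i else 0)"

definition field_definable_over :: "complex set \<Rightarrow> nat \<Rightarrow> complex list set \<Rightarrow> bool" where
  "field_definable_over A k X \<longleftrightarrow>
     (\<exists>\<phi>. fparams \<phi> \<subseteq> A \<and> X = {xs. length xs = k \<and> fsat (tuple_env xs) \<phi>})"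

inductive_set subfield_gen :: "complex set \<Rightarrow> complex set" for A where
  base: "a \<in> A \<Longrightarrow> a \<in> subfield_gen A"
| zero: "0 \<in> subfield_gen A"
| one: "1 \<in> subfield_gen A"
| add: "a \<in> subfield_gen A \<Longrightarrow> b \<in> subfield_gen A \<Longrightarrow> a + b \<in> subfield_gen A"
| neg: "a \<in> subfield_gen A \<Longrightarrow> - a \<in> subfield_gen A"
| mul: "a \<in> subfield_gen A \<Longrightarrow> b \<in> subfield_gen A \<Longrightarrow> a * b \<in> subfield_gen A"
| inv: "a \<in> subfield_gen A \<Longrightarrow> inverse a \<in> subfield_gen A"

definition acl :: "complex set \<Rightarrow> complex set" where
  "acl A = {b. \<exists>p :: complex poly. p \<noteq> 0 \<and> (\<forall>i. coeff p i \<in> subfield_gen A) \<and> poly p b = 0}"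

definition tuple_dim_le :: "complex set \<Rightarrow> complex list \<Rightarrow> nat \<Rightarrow> bool" where
  "tuple_dim_le A xs n \<longleftrightarrow>
     (\<exists>J. J \<subseteq> set xs \<and> card J \<le> n \<and> set xs \<subseteq> acl (A \<union> J))"

text \<open>Basic relations: field-definable (with parameters) subsets of C^k of dimension \<le> 1.
  The dimension of X defined over a finite A is max of dim(a/A), a \<in> X.\<close>
definition basic_rel :: "nat \<Rightarrow> complex list set \<Rightarrow> bool" where
  "basic_rel k X \<longleftrightarrow>
     (\<exists>A. finite A \<and> field_definable_over A k X \<and> (\<forall>xs\<in>X. tuple_dim_le A xs 1))"

definition C3_rels :: "complex list set set" where
  "C3_rels = {X. \<exists>k\<le>3. basic_rel k X}"

definition C_rels :: "complex list set set" where
  "C_rels = {X. \<exists>k. basic_rel k X}"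

text \<open>Relation symbols are the relations themselves.\<close>
datatype 'r rfml = REq nat nat | RRel 'r "nat list" | RNot "'r rfml"
  | RAnd "'r rfml" "'r rfml" | REx nat "'r rfml"

primrec rsat :: "(nat \<Rightarrow> complex) \<Rightarrow> complex list set rfml \<Rightarrow> bool" where
  "rsat e (REq i j) = (e i = e j)"
| "rsat e (RRel S vs) = (map e vs \<in> S)"
| "rsat e (RNot p) = (\<not> rsat e p)"
| "rsat e (RAnd p q) = (rsat e p \<and> rsat e q)"
| "rsat e (REx n p) = (\<exists>a. rsat (e(n := a)) p)"

primrec rsyms :: "'r rfml \<Rightarrow> 'r set" where
  "rsyms (REq i j) = {}"
| "rsyms (RRel S vs) = {S}"
| "rsyms (RNot p) = rsyms p"
| "rsyms (RAnd p q) = rsyms p \<union> rsyms q"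
| "rsyms (REx n p) = rsyms p"

definition struct_definable :: "complex list set set \<Rightarrow> nat \<Rightarrow> complex list set \<Rightarrow> bool" where
  "struct_definable Rels m X \<longleftrightarrow>
     (\<exists>\<phi>. rsyms \<phi> \<subseteq> Rels \<and> X = {xs. length xs = m \<and> rsat (tuple_env xs) \<phi>})"

end

theory Submission
  imports Defs "HOL-Algebra.Finite_Extensions" "HOL-Analysis.Continuum_Not_Denumerable" "HOL-Library.Countable"
begin
hide_const (open) up_ring.coeff up_ring.monom module.smult

lemma sg_base: "A \<subseteq> subfield_gen A" by (auto intro: subfield_gen.base)

lemma sg_mono: "A \<subseteq> B \<Longrightarrow> subfield_gen A \<subseteq> subfield_gen B"
proof
  fix x assume "x \<in> subfield_gen A" "A \<subseteq> B"
  then show "x \<in> subfield_gen B"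
    by (induction rule: subfield_gen.induct) (auto intro: subfield_gen.intros)
qed

lemma sg_diff: "a \<in> subfield_gen A \<Longrightarrow> b \<in> subfield_gen A \<Longrightarrow> a - b \<in> subfield_gen A"
  using subfield_gen.add[of a A "-b"] subfield_gen.neg by auto

lemma sg_divide: "a \<in> subfield_gen A \<Longrightarrow> b \<in> subfield_gen A \<Longrightarrow> a / b \<in> subfield_gen A"
  by (simp add: divide_inverse subfield_gen.mul subfield_gen.inv)

lemma sg_sum: "(\<And>i. i \<in> I \<Longrightarrow> f i \<in> subfield_gen A) \<Longrightarrow> sum f I \<in> subfield_gen A"
  by (induction I rule: infinite_finite_induct) (auto intro: subfield_gen.intros)

lemma sg_prod: "(\<And>i. i \<in> I \<Longrightarrow> f i \<in> subfield_gen A) \<Longrightarrow> prod f I \<in> subfield_gen A"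
  by (induction I rule: infinite_finite_induct) (auto intro: subfield_gen.intros)

lemma sg_power: "a \<in> subfield_gen A \<Longrightarrow> a ^ n \<in> subfield_gen A"
  by (induction n) (auto intro: subfield_gen.intros)

lemma sg_minimal:
  assumes "A \<subseteq> F" "0 \<in> F" "1 \<in> F" "\<And>a b. a \<in> F \<Longrightarrow> b \<in> F \<Longrightarrow> a + b \<in> F"
    "\<And>a. a \<in> F \<Longrightarrow> - a \<in> F" "\<And>a b. a \<in> F \<Longrightarrow> b \<in> F \<Longrightarrow> a * b \<in> F"
    "\<And>a. a \<in> F \<Longrightarrow> inverse a \<in> F"
  shows "subfield_gen A \<subseteq> F"
proof
  fix x assume "x \<in> subfield_gen A" then show "x \<in> F"
    by (induction rule: subfield_gen.induct) (use assms in auto)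
qed

lemma sg_idem: "subfield_gen (subfield_gen A) = subfield_gen A"
  by (rule antisym, rule sg_minimal) (auto intro: subfield_gen.intros sg_base)

lemma sg_poly: "(\<forall>i. coeff p i \<in> subfield_gen A) \<Longrightarrow> x \<in> subfield_gen A \<Longrightarrow> poly p x \<in> subfield_gen A"
proof (induction p)
  case (pCons a p)
  have "a \<in> subfield_gen A" using pCons(3) coeff_pCons_0[of a p] by metis
  moreover have "\<forall>i. coeff p i \<in> subfield_gen A" using pCons(3) coeff_pCons_Suc[of a p] by metis
  ultimately show ?case using pCons by (auto intro: subfield_gen.intros)
qed auto

lemma acl_sg: "subfield_gen A \<subseteq> acl A"
proof
  fix a assume a: "a \<in> subfield_gen A"
  have "[:-a,1:] \<noteq> 0" by simp
  moreover have "\<forall>i. coeff [:-a,1:] i \<in> subfield_gen A"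
    using a by (auto simp: coeff_pCons split: nat.split intro: subfield_gen.intros)
  ultimately show "a \<in> acl A" unfolding acl_def by (intro CollectI exI[of _ "[:-a,1:]"]) auto
qed

lemma acl_base: "A \<subseteq> acl A" using sg_base acl_sg by blast

lemma acl_mono: "A \<subseteq> B \<Longrightarrow> acl A \<subseteq> acl B"
  unfolding acl_def using sg_mono by blast

section \<open>Complex numbers as an HOL-Algebra field\<close>

definition CR :: "complex ring" where
  "CR = \<lparr>carrier = UNIV, monoid.mult = (*), one = 1, ring.zero = 0, add = (+)\<rparr>"

lemma CR_simps[simp]: "carrier CR = UNIV" "mult CR = (*)" "one CR = 1" "zero CR = 0" "add CR = (+)"
  by (auto simp: CR_def)

lemma field_CR: "field CR"
proof -
  have "\<exists>y. x + y = 0" for x :: complex by (rule exI[of _ "-x"]) simp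
  moreover have "x \<noteq> 0 \<Longrightarrow> \<exists>y. x * y = 1" for x :: complex
    by (rule exI[of _ "inverse x"]) auto
  ultimately show ?thesis
    unfolding CR_def by unfold_locales (auto simp: algebra_simps Units_def)
qed

interpretation CR: domain CR using field_CR by (rule field.axioms)

lemma CR_ainv[simp]: "a_inv CR x = - x"
  using CR.add.inv_equality[of "-x" x] by simp

lemma CR_inv[simp]: "x \<noteq> 0 \<Longrightarrow> m_inv CR x = inverse x"
  using CR.comm_inv_char[of x "inverse x"] by simp

lemma CR_pow[simp]: "pow CR x (n::nat) = x ^ n"
  by (induction n) (auto)

lemma subfield_sg: "subfield (subfield_gen A) CR"
proof (rule field.subfieldI'[OF field_CR CR.subringI])
  show "subfield_gen A \<subseteq> carrier CR" by simp
  show "\<one>\<^bsub>CR\<^esub> \<in> subfield_gen A" by (simp add: subfield_gen.one)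
  show "\<ominus>\<^bsub>CR\<^esub> h \<in> subfield_gen A" if "h \<in> subfield_gen A" for h
    using that by (simp add: subfield_gen.neg)
  show "h1 \<otimes>\<^bsub>CR\<^esub> h2 \<in> subfield_gen A" if "h1 \<in> subfield_gen A" "h2 \<in> subfield_gen A" for h1 h2
    using that by (simp add: subfield_gen.mul)
  show "h1 \<oplus>\<^bsub>CR\<^esub> h2 \<in> subfield_gen A" if "h1 \<in> subfield_gen A" "h2 \<in> subfield_gen A" for h1 h2
    using that by (simp add: subfield_gen.add)
  show "inv\<^bsub>CR\<^esub> k \<in> subfield_gen A" if "k \<in> subfield_gen A - {\<zero>\<^bsub>CR\<^esub>}" for k
    using that by (simp add: subfield_gen.inv)
qed

lemma subfield_closed:
  assumes "subfield F CR"
  shows "0 \<in> F" "1 \<in> F" "\<And>a b. a \<in> F \<Longrightarrow> b \<in> F \<Longrightarrow> a + b \<in> F"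
    "\<And>a. a \<in> F \<Longrightarrow> - a \<in> F" "\<And>a b. a \<in> F \<Longrightarrow> b \<in> F \<Longrightarrow> a * b \<in> F"
    "\<And>a. a \<in> F \<Longrightarrow> inverse a \<in> F"
proof -
  have sr: "subring F CR" using assms by (rule subfieldE(1))
  show "0 \<in> F" using subringE(2)[OF sr] by simp
  show "1 \<in> F" using subringE(3)[OF sr] by simp
  show "\<And>a b. a \<in> F \<Longrightarrow> b \<in> F \<Longrightarrow> a + b \<in> F" using subringE(7)[OF sr] by simp
  show "\<And>a. a \<in> F \<Longrightarrow> - a \<in> F" using subringE(5)[OF sr] by simp
  show "\<And>a b. a \<in> F \<Longrightarrow> b \<in> F \<Longrightarrow> a * b \<in> F" using subringE(6)[OF sr] by simp
  show "inverse a \<in> F" if "a \<in> F" for a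
  proof (cases "a = 0")
    case True then show ?thesis using subringE(2)[OF sr] by simp
  next
    case False then show ?thesis using CR.subfield_m_inv(1)[OF assms, of a] that by simp
  qed
qed

lemma sg_subfield_le: "subfield F CR \<Longrightarrow> A \<subseteq> F \<Longrightarrow> subfield_gen A \<subseteq> F"
  by (rule sg_minimal) (use subfield_closed in auto)

lemma poly_Poly_sum: "poly (Poly xs) (x::complex) = (\<Sum>i<length xs. xs!i * x^i)"
proof (induction xs)
  case (Cons a xs)
  have "poly (Poly (a#xs)) x = a + x * (\<Sum>i<length xs. xs!i * x^i)" using Cons by simp
  also have "\<dots> = (\<Sum>i<length (a#xs). (a#xs)!i * x^i)"
    by (simp add: sum.lessThan_Suc_shift sum_distrib_left mult_ac del: sum.lessThan_Suc)
  finally show ?case .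
qed simp

lemma eval_sum: "CR.eval l x = (\<Sum>i<length l. (rev l)!i * x^i)"
proof (induction l)
  case (Cons a l)
  have "CR.eval (a#l) x = a * x^(length l) + CR.eval l x" by simp
  also have "\<dots> = (\<Sum>i<length (a#l). (rev (a#l))!i * x^i)"
    using Cons by (simp add: nth_append)
  finally show ?case .
qed simp

lemma eval_poly: "CR.eval l x = poly (Poly (rev l)) x"
  by (simp add: eval_sum poly_Poly_sum)

lemma sg_subring: "subring (subfield_gen A) CR"
  by (rule subfieldE(1)[OF subfield_sg])

lemma acl_iff_alg: "b \<in> acl A \<longleftrightarrow> (CR.algebraic over (subfield_gen A)) b"
proof
  assume "b \<in> acl A"
  then obtain p where p: "p \<noteq> 0" "\<forall>i. coeff p i \<in> subfield_gen A" "poly p b = 0"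
    unfolding acl_def by blast
  define l where "l = rev (coeffs p)"
  have "set (coeffs p) \<subseteq> subfield_gen A"
  proof
    fix c assume "c \<in> set (coeffs p)"
    then obtain n where "n < length (coeffs p)" "c = coeffs p ! n" by (metis in_set_conv_nth)
    then have "c = coeff p n" using p(1) coeffs_nth length_coeffs_degree by (metis less_Suc_eq_le)
    then show "c \<in> subfield_gen A" using p(2) by simp
  qed
  moreover have "hd l \<noteq> 0" using p(1) unfolding l_def by (simp add: hd_rev last_coeffs_eq_coeff_degree)
  ultimately have "l \<in> carrier ((subfield_gen A)[X]\<^bsub>CR\<^esub>)"
    unfolding l_def univ_poly_carrier[symmetric] polynomial_def by simp
  moreover have "l \<noteq> []" using p(1) unfolding l_def by simp
  moreover have "CR.eval l b = \<zero>\<^bsub>CR\<^esub>" using p(3) unfolding l_def by (simp add: eval_poly)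
  ultimately show "(CR.algebraic over (subfield_gen A)) b" by (rule CR.algebraicI)
next
  assume "(CR.algebraic over (subfield_gen A)) b"
  then obtain l where l: "l \<in> carrier ((subfield_gen A)[X]\<^bsub>CR\<^esub>)" "l \<noteq> []" "CR.eval l b = \<zero>\<^bsub>CR\<^esub>"
    using CR.algebraicE[OF sg_subring, of b] by auto
  have hl: "hd l \<noteq> 0" "set l \<subseteq> subfield_gen A"
    using l(1,2) unfolding univ_poly_carrier[symmetric] polynomial_def by auto
  define p where "p = Poly (rev l)"
  have "coeffs p = rev l" unfolding p_def using hl(1) l(2)
    by (cases l) (auto simp: last_rev strip_while_def hd_rev)
  then have "p \<noteq> 0" using l(2) by (metis Nil_is_rev_conv coeffs_eq_Nil)
  moreover have "\<forall>i. coeff p i \<in> subfield_gen A"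
  proof
    fix i show "coeff p i \<in> subfield_gen A"
      unfolding p_def using hl(2) nth_mem[of i "rev l"]
      by (auto simp: nth_default_def subfield_gen.zero)
  qed
  moreover have "poly p b = 0" using l(3) by (simp add: eval_poly p_def)
  ultimately show "b \<in> acl A" unfolding acl_def by blast
qed

lemma sg_finite_char: "x \<in> subfield_gen A \<Longrightarrow> \<exists>S. finite S \<and> S \<subseteq> A \<and> x \<in> subfield_gen S"
proof (induction rule: subfield_gen.induct)
  case (base a) then show ?case by (intro exI[of _ "{a}"]) (auto intro: subfield_gen.base)
next
  case zero then show ?case by (intro exI[of _ "{}"]) (auto intro: subfield_gen.intros)
next
  case one then show ?case by (intro exI[of _ "{}"]) (auto intro: subfield_gen.intros)
next
  case (add a b)
  then obtain S T where "finite S" "S \<subseteq> A" "a \<in> subfield_gen S" "finite T" "T \<subseteq> A" "b \<in> subfield_gen T" by blast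
  then show ?case using sg_mono[of S "S \<union> T"] sg_mono[of T "S \<union> T"]
    by (intro exI[of _ "S \<union> T"]) (auto intro: subfield_gen.add)
next
  case (neg a) then show ?case by (auto intro: subfield_gen.neg)
next
  case (mul a b)
  then obtain S T where "finite S" "S \<subseteq> A" "a \<in> subfield_gen S" "finite T" "T \<subseteq> A" "b \<in> subfield_gen T" by blast
  then show ?case using sg_mono[of S "S \<union> T"] sg_mono[of T "S \<union> T"]
    by (intro exI[of _ "S \<union> T"]) (auto intro: subfield_gen.mul)
next
  case (inv a) then show ?case by (auto intro: subfield_gen.inv)
qed

lemma acl_trans_list:
  assumes bs: "set bs \<subseteq> acl C" and b: "b \<in> acl (C \<union> set bs)"
  shows "b \<in> acl C"
proof -
  let ?K = "subfield_gen C"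
  have K: "subfield ?K CR" by (rule subfield_sg)
  have alg: "\<And>x. x \<in> set bs \<Longrightarrow> (CR.algebraic over ?K) x" using bs acl_iff_alg by blast
  define F where "F = CR.finite_extension ?K bs"
  have Fsub: "subfield F CR" unfolding F_def
    using CR.finite_extension_is_subfield[OF K _ alg] by simp
  have Fdim: "CR.finite_dimension ?K F" unfolding F_def
    using CR.finite_extension_finite_dimension(1)[OF K _ alg] by simp
  have "?K \<subseteq> F" unfolding F_def by (rule CR.finite_extension_incl) auto
  moreover have "set bs \<subseteq> F" unfolding F_def by (rule CR.finite_extension_mem[OF sg_subring]) auto
  moreover have "C \<subseteq> ?K" by (rule sg_base)
  ultimately have "subfield_gen (C \<union> set bs) \<subseteq> F" using sg_subfield_le[OF Fsub] by auto
  then have "(CR.algebraic over F) b" using b acl_iff_alg CR.algebraic_mono by blast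
  then have "CR.finite_dimension F (CR.simple_extension F b)"
    using CR.finite_dimension_simple_extension[OF Fsub] by simp
  then have "CR.finite_dimension ?K (CR.simple_extension F b)"
    using CR.telescopic_base_dim(1)[OF K Fsub Fdim] by blast
  moreover have "b \<in> CR.simple_extension F b"
    using CR.simple_extension_mem[OF subfieldE(1)[OF Fsub]] by simp
  moreover have "subring (CR.simple_extension F b) CR"
    using CR.simple_extension_is_subring[OF subfieldE(1)[OF Fsub]] by simp
  ultimately have "(CR.algebraic over ?K) b"
    using CR.finite_dimension_imp_algebraic[OF K] by blast
  then show ?thesis using acl_iff_alg by blast
qed

lemma acl_acl: "acl (acl C) \<subseteq> acl C"
proof
  fix b assume "b \<in> acl (acl C)"
  then obtain p where p: "p \<noteq> 0" "\<forall>i. coeff p i \<in> subfield_gen (acl C)" "poly p b = 0"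
    unfolding acl_def by blast
  have "\<forall>i\<in>{..Polynomial.degree p}. \<exists>S. finite S \<and> S \<subseteq> acl C \<and> coeff p i \<in> subfield_gen S"
    using p(2) sg_finite_char by blast
  then obtain S where S: "\<And>i. i \<in> {..Polynomial.degree p} \<Longrightarrow> finite (S i) \<and> S i \<subseteq> acl C \<and> coeff p i \<in> subfield_gen (S i)"
    by metis
  define T where "T = (\<Union>i\<in>{..Polynomial.degree p}. S i)"
  have "finite T" "T \<subseteq> acl C" unfolding T_def using S by auto
  then obtain bs where bs: "set bs = T" using finite_list by blast
  have "\<forall>i. coeff p i \<in> subfield_gen (C \<union> set bs)"
  proof
    fix i show "coeff p i \<in> subfield_gen (C \<union> set bs)"
    proof (cases "i \<le> Polynomial.degree p")
      case True
      then have "coeff p i \<in> subfield_gen (S i)" using S by auto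
      moreover have "S i \<subseteq> C \<union> set bs" using True bs unfolding T_def by auto
      ultimately show ?thesis using sg_mono by blast
    next
      case False then show ?thesis by (simp add: coeff_eq_0 subfield_gen.zero)
    qed
  qed
  then have "b \<in> acl (C \<union> set bs)" using p unfolding acl_def by blast
  then show "b \<in> acl C" using acl_trans_list[of bs C b] bs \<open>T \<subseteq> acl C\<close> by blast
qed

lemma acl_trans: "B \<subseteq> acl C \<Longrightarrow> acl B \<subseteq> acl C"
  using acl_mono acl_acl by blast

lemma acl_trans2: "B \<subseteq> acl C \<Longrightarrow> acl (C \<union> B) \<subseteq> acl C"
  using acl_trans[of "C \<union> B" C] acl_base by blast

lemma sg_acl: "subfield_gen (acl C) \<subseteq> acl C"
  using acl_sg acl_acl by blast

definition Kp :: "complex set \<Rightarrow> complex poly \<Rightarrow> bool" where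
  "Kp K p \<longleftrightarrow> (\<forall>i. coeff p i \<in> K)"

lemma Kp_add: "Kp (subfield_gen A) p \<Longrightarrow> Kp (subfield_gen A) q \<Longrightarrow> Kp (subfield_gen A) (p + q)"
  by (auto simp: Kp_def intro: subfield_gen.add)

lemma Kp_minus: "Kp (subfield_gen A) p \<Longrightarrow> Kp (subfield_gen A) (- p)"
  by (auto simp: Kp_def intro: subfield_gen.neg)

lemma Kp_mult: "Kp (subfield_gen A) p \<Longrightarrow> Kp (subfield_gen A) q \<Longrightarrow> Kp (subfield_gen A) (p * q)"
  unfolding Kp_def coeff_mult by (auto intro!: sg_sum subfield_gen.mul)

lemma Kp_const: "c \<in> subfield_gen A \<Longrightarrow> Kp (subfield_gen A) [:c:]"
  by (auto simp: Kp_def coeff_pCons split: nat.split intro: subfield_gen.zero)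

lemma Kp_X: "Kp (subfield_gen A) [:0,1:]"
  by (auto simp: Kp_def coeff_pCons split: nat.split intro: subfield_gen.zero subfield_gen.one)

lemma Kp_zero: "Kp (subfield_gen A) 0" by (auto simp: Kp_def intro: subfield_gen.zero)

lemma Kp_one: "Kp (subfield_gen A) 1"
  by (auto simp: Kp_def coeff_1 intro: subfield_gen.zero subfield_gen.one)

lemma Kp_prod: "(\<And>i. i \<in> I \<Longrightarrow> Kp (subfield_gen A) (f i)) \<Longrightarrow> Kp (subfield_gen A) (prod f I)"
  by (induction I rule: infinite_finite_induct) (auto intro: Kp_one Kp_mult)

lemma Kp_mono: "Kp K p \<Longrightarrow> K \<subseteq> K' \<Longrightarrow> Kp K' p" by (auto simp: Kp_def)

lemma rat_rep:
  assumes "x \<in> subfield_gen (A \<union> {a})"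
  shows "\<exists>f g. Kp (subfield_gen A) f \<and> Kp (subfield_gen A) g \<and> poly g a \<noteq> 0 \<and> x = poly f a / poly g a"
  using assms
proof (induction rule: subfield_gen.induct)
  case (base c)
  then show ?case
  proof
    assume "c \<in> A" then show ?thesis
      by (intro exI[of _ "[:c:]"] exI[of _ 1]) (auto intro: Kp_const Kp_one subfield_gen.base)
  next
    assume "c \<in> {a}" then show ?thesis
      by (intro exI[of _ "[:0,1:]"] exI[of _ 1]) (auto intro: Kp_X Kp_one)
  qed
next
  case zero then show ?case by (intro exI[of _ 0] exI[of _ 1]) (auto intro: Kp_zero Kp_one)
next
  case one then show ?case by (intro exI[of _ 1] exI[of _ 1]) (auto intro: Kp_one)
next
  case (add x y)
  then obtain f1 g1 f2 g2 where h: "Kp (subfield_gen A) f1" "Kp (subfield_gen A) g1" "poly g1 a \<noteq> 0" "x = poly f1 a / poly g1 a"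
    "Kp (subfield_gen A) f2" "Kp (subfield_gen A) g2" "poly g2 a \<noteq> 0" "y = poly f2 a / poly g2 a" by blast
  show ?case
    by (rule exI[of _ "f1 * g2 + f2 * g1"], rule exI[of _ "g1 * g2"])
       (use h in \<open>auto intro!: Kp_add Kp_mult simp: add_frac_eq\<close>)
next
  case (neg x)
  then obtain f g where h: "Kp (subfield_gen A) f" "Kp (subfield_gen A) g" "poly g a \<noteq> 0" "x = poly f a / poly g a" by blast
  show ?case by (rule exI[of _ "- f"], rule exI[of _ g]) (use h in \<open>auto intro!: Kp_minus\<close>)
next
  case (mul x y)
  then obtain f1 g1 f2 g2 where h: "Kp (subfield_gen A) f1" "Kp (subfield_gen A) g1" "poly g1 a \<noteq> 0" "x = poly f1 a / poly g1 a"
    "Kp (subfield_gen A) f2" "Kp (subfield_gen A) g2" "poly g2 a \<noteq> 0" "y = poly f2 a / poly g2 a" by blast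
  show ?case
    by (rule exI[of _ "f1 * f2"], rule exI[of _ "g1 * g2"])
       (use h in \<open>auto intro!: Kp_add Kp_mult\<close>)
next
  case (inv x)
  then obtain f g where h: "Kp (subfield_gen A) f" "Kp (subfield_gen A) g" "poly g a \<noteq> 0" "x = poly f a / poly g a" by blast
  show ?case
  proof (cases "poly f a = 0")
    case True then show ?thesis using h by (intro exI[of _ 0] exI[of _ 1]) (auto intro: Kp_zero Kp_one)
  next
    case False then show ?thesis using h by (intro exI[of _ g] exI[of _ f]) auto
  qed
qed

lemma acl_exchange:
  assumes b: "b \<in> acl (A \<union> {a})" and nb: "b \<notin> acl A"
  shows "a \<in> acl (A \<union> {b})"
proof -
  let ?K = "subfield_gen A"
  obtain P where P: "P \<noteq> 0" "\<forall>i. coeff P i \<in> subfield_gen (A \<union> {a})" "poly P b = 0"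
    using b unfolding acl_def by blast
  define n where "n = Polynomial.degree P"
  have "\<forall>j\<in>{..n}. \<exists>f g. Kp ?K f \<and> Kp ?K g \<and> poly g a \<noteq> 0 \<and> coeff P j = poly f a / poly g a"
    using P(2) rat_rep by blast
  then obtain f g where fg: "\<And>j. j \<in> {..n} \<Longrightarrow> Kp ?K (f j) \<and> Kp ?K (g j) \<and> poly (g j) a \<noteq> 0 \<and> coeff P j = poly (f j) a / poly (g j) a"
    by metis
  define D where "D = (\<Prod>l\<le>n. poly (g l) a)"
  have D0: "D \<noteq> 0" unfolding D_def using fg by auto
  define F where "F j = f j * (\<Prod>l\<in>{..n}-{j}. g l)" for j
  have KF: "Kp ?K (F j)" if "j \<le> n" for j
    unfolding F_def using fg that by (auto intro!: Kp_mult Kp_prod)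
  have polyF: "poly (F j) a = coeff P j * D" if "j \<le> n" for j
  proof -
    have "D = poly (g j) a * (\<Prod>l\<in>{..n}-{j}. poly (g l) a)"
      unfolding D_def using that by (simp add: prod.remove)
    then show ?thesis unfolding F_def using fg[of j] that by (simp add: poly_prod)
  qed
  define Q where "Q = (\<Sum>j\<le>n. smult (b^j) (F j))"
  have "poly Q a = (\<Sum>j\<le>n. b^j * (coeff P j * D))"
    unfolding Q_def by (simp add: poly_sum polyF)
  also have "\<dots> = D * (\<Sum>j\<le>n. coeff P j * b^j)" by (simp add: sum_distrib_left mult_ac)
  also have "\<dots> = 0" using P(3) by (simp add: poly_altdef n_def)
  finally have Qa: "poly Q a = 0" .
  have subK: "?K \<subseteq> subfield_gen (A \<union> {b})" by (rule sg_mono) auto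
  have bK: "b \<in> subfield_gen (A \<union> {b})" by (auto intro: subfield_gen.base)
  have KQ: "\<forall>i. coeff Q i \<in> subfield_gen (A \<union> {b})"
  proof
    fix i
    have "b ^ j * coeff (F j) i \<in> subfield_gen (A \<union> {b})" if "j \<in> {..n}" for j
    proof (rule subfield_gen.mul)
      show "b ^ j \<in> subfield_gen (A \<union> {b})" using bK by (rule sg_power)
      show "coeff (F j) i \<in> subfield_gen (A \<union> {b})" using KF[of j] that subK unfolding Kp_def by auto
    qed
    then show "coeff Q i \<in> subfield_gen (A \<union> {b})"
      unfolding Q_def coeff_sum coeff_smult by (rule sg_sum)
  qed
  have "Q \<noteq> 0"
  proof
    assume Q0: "Q = 0"
    have "coeff (F n) m = 0" for m
    proof -
      define G where "G = (\<Sum>j\<le>n. Polynomial.monom (coeff (F j) m) j)"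
      have "poly G b = coeff Q m"
        unfolding G_def Q_def poly_sum coeff_sum coeff_smult poly_monom by (simp add: mult.commute)
      then have "poly G b = 0" using Q0 by simp
      moreover have "Kp ?K G" unfolding Kp_def
      proof
        fix i
        have "coeff (Polynomial.monom (coeff (F j) m) j) i \<in> ?K" if "j \<in> {..n}" for j
          using KF[of j] that subfield_gen.zero[of A] by (auto simp: Kp_def coeff_monom)
        then show "coeff G i \<in> ?K" unfolding G_def coeff_sum by (rule sg_sum)
      qed
      ultimately have "G = 0" using nb unfolding acl_def Kp_def by blast
      then have "coeff G n = 0" by simp
      moreover have "coeff G n = coeff (F n) m"
        unfolding G_def coeff_sum by (simp add: coeff_monom)
      ultimately show ?thesis by simp
    qed
    then have "F n = 0" by (simp add: poly_eqI)
    then have "coeff P n * D = 0" using polyF[of n] by simp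
    then show False using D0 P(1) unfolding n_def by simp
  qed
  then show ?thesis using Qa KQ unfolding acl_def by blast
qed

section \<open>Countability\<close>

primrec lev :: "complex set \<Rightarrow> nat \<Rightarrow> complex set" where
  "lev A 0 = A \<union> {0, 1}"
| "lev A (Suc n) = lev A n \<union> (\<lambda>(x,y). x + y) ` (lev A n \<times> lev A n) \<union> uminus ` lev A n
     \<union> (\<lambda>(x,y). x * y) ` (lev A n \<times> lev A n) \<union> inverse ` lev A n"

lemma lev_countable: "countable A \<Longrightarrow> countable (lev A n)"
proof (induction n)
  case 0 then show ?case by simp
next
  case (Suc n)
  have c: "countable (lev A n)" using Suc by simp
  have cp: "countable (lev A n \<times> lev A n)" using c by (intro countable_SIGMA)
  show ?case unfolding lev.simps
    by (intro countable_Un countable_image c cp)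
qed

lemma lev_mono: "m \<le> n \<Longrightarrow> lev A m \<subseteq> lev A n"
  by (rule lift_Suc_mono_le[of "lev A"]) auto

lemma sg_lev: "x \<in> subfield_gen A \<Longrightarrow> \<exists>n. x \<in> lev A n"
proof (induction rule: subfield_gen.induct)
  case (base a) then show ?case by (intro exI[of _ 0]) simp
next
  case zero then show ?case by (intro exI[of _ 0]) simp
next
  case one then show ?case by (intro exI[of _ 0]) simp
next
  case (add a b)
  then obtain m n where "a \<in> lev A m" "b \<in> lev A n" by blast
  then have "a \<in> lev A (max m n)" "b \<in> lev A (max m n)"
    by (meson lev_mono max.cobounded1 max.cobounded2 subsetD)+
  then have "a + b \<in> (\<lambda>(x,y). x + y) ` (lev A (max m n) \<times> lev A (max m n))"
    by (intro image_eqI[where x="(a,b)"]) auto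
  then show ?case by (intro exI[of _ "Suc (max m n)"]) (simp only: lev.simps Un_iff, blast)
next
  case (mul a b)
  then obtain m n where "a \<in> lev A m" "b \<in> lev A n" by blast
  then have "a \<in> lev A (max m n)" "b \<in> lev A (max m n)"
    by (meson lev_mono max.cobounded1 max.cobounded2 subsetD)+
  then have "a * b \<in> (\<lambda>(x,y). x * y) ` (lev A (max m n) \<times> lev A (max m n))"
    by (intro image_eqI[where x="(a,b)"]) auto
  then show ?case by (intro exI[of _ "Suc (max m n)"]) (simp only: lev.simps Un_iff, blast)
next
  case (neg a) then obtain n where "a \<in> lev A n" by blast
  then show ?case by (intro exI[of _ "Suc n"]) (simp only: lev.simps Un_iff image_eqI, blast)
next
  case (inv a) then obtain n where "a \<in> lev A n" by blast
  then show ?case by (intro exI[of _ "Suc n"]) (simp only: lev.simps Un_iff image_eqI, blast)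
qed

lemma sg_countable: "countable A \<Longrightarrow> countable (subfield_gen A)"
proof -
  assume A: "countable A"
  have "subfield_gen A \<subseteq> (\<Union>n. lev A n)" using sg_lev by blast
  moreover have "countable (\<Union>n. lev A n)" using lev_countable[OF A] by auto
  ultimately show ?thesis by (rule countable_subset)
qed

lemma set_coeffs_range: "set (coeffs p) \<subseteq> range (coeff p)"
  by (auto simp: coeffs_def)

lemma acl_countable: "countable A \<Longrightarrow> countable (acl A)"
proof -
  assume A: "countable A"
  let ?K = "subfield_gen A"
  let ?P = "{p. p \<noteq> 0 \<and> (\<forall>i. coeff p i \<in> ?K)}"
  have "?P \<subseteq> Poly ` lists ?K"
  proof
    fix p assume p: "p \<in> ?P"
    have "set (coeffs p) \<subseteq> ?K" using set_coeffs_range[of p] p by blast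
    then have "coeffs p \<in> lists ?K" by blast
    then show "p \<in> Poly ` lists ?K" by (metis Poly_coeffs image_eqI)
  qed
  moreover have "countable (Poly ` lists ?K)"
    using sg_countable[OF A] by (intro countable_image countable_lists)
  ultimately have cP: "countable ?P" by (rule countable_subset)
  have "acl A \<subseteq> (\<Union>p\<in>?P. {x. poly p x = 0})"
  proof
    fix x assume "x \<in> acl A"
    then obtain p where "p \<noteq> 0" "\<forall>i. coeff p i \<in> ?K" "poly p x = 0" unfolding acl_def by blast
    then show "x \<in> (\<Union>p\<in>?P. {x. poly p x = 0})" by blast
  qed
  moreover have "countable (\<Union>p\<in>?P. {x. poly p x = 0})"
  proof (rule countable_UN[OF cP])
    fix p assume "p \<in> ?P"
    then have "finite {x. poly p x = 0}" by (intro poly_roots_finite) simp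
    then show "countable {x. poly p x = 0}" by (rule countable_finite)
  qed
  ultimately show ?thesis by (rule countable_subset)
qed

lemma exists_generic: "countable A \<Longrightarrow> \<exists>x. x \<notin> acl A"
proof (rule ccontr)
  assume A: "countable A" and "\<not> (\<exists>x. x \<notin> acl A)"
  then have "UNIV \<subseteq> acl A" by blast
  then have "countable (UNIV :: complex set)" using acl_countable[OF A] by (rule countable_subset)
  then show False using uncountable_UNIV_complex by simp
qed

definition indep :: "complex set \<Rightarrow> complex set \<Rightarrow> bool" where
  "indep B I \<longleftrightarrow> (\<forall>x\<in>I. x \<notin> acl (B \<union> (I - {x})))"

lemma acl_sub: "S \<subseteq> acl T \<Longrightarrow> x \<in> acl S \<Longrightarrow> x \<in> acl T"
  using acl_trans by blast

lemma steinitz_aux: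
  "card (I - C) = n \<Longrightarrow> finite I \<Longrightarrow> finite C \<Longrightarrow> indep B I \<Longrightarrow> I \<subseteq> acl (B \<union> C) \<Longrightarrow> card I \<le> card C"
proof (induction n arbitrary: I rule: less_induct)
  case (less n I)
  show ?case
  proof (cases "I \<subseteq> C")
    case True then show ?thesis using less.prems card_mono by blast
  next
    case False
    then obtain a where a: "a \<in> I" "a \<notin> C" by blast
    have na: "a \<notin> acl (B \<union> (I - {a}))" using less.prems(4) a(1) by (simp add: indep_def)
    have "\<exists>c\<in>C - I. c \<notin> acl (B \<union> (I - {a}))"
    proof (rule ccontr)
      assume "\<not> ?thesis"
      then have "C - I \<subseteq> acl (B \<union> (I - {a}))" by blast
      moreover have "C \<inter> I \<subseteq> acl (B \<union> (I - {a}))" using a(2) acl_base[of "B \<union> (I - {a})"] by blast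
      moreover have "B \<subseteq> acl (B \<union> (I - {a}))" using acl_base[of "B \<union> (I - {a})"] by blast
      ultimately have "B \<union> C \<subseteq> acl (B \<union> (I - {a}))" by blast
      then have "acl (B \<union> C) \<subseteq> acl (B \<union> (I - {a}))" by (rule acl_trans)
      then show False using less.prems(5) a(1) na by blast
    qed
    then obtain c where c: "c \<in> C" "c \<notin> I" "c \<notin> acl (B \<union> (I - {a}))" by blast
    define I' where "I' = insert c (I - {a})"
    have fin': "finite I'" unfolding I'_def using less.prems(2) by simp
    have sub': "I' \<subseteq> acl (B \<union> C)" unfolding I'_def using less.prems(5) c(1) acl_base[of "B \<union> C"] by blast
    have ind': "indep B I'" unfolding indep_def
    proof
      fix x assume x: "x \<in> I'"
      show "x \<notin> acl (B \<union> (I' - {x}))"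
      proof (cases "x = c")
        case True
        then have "I' - {x} = I - {a}" unfolding I'_def using c(2) by auto
        then show ?thesis using c(3) True by simp
      next
        case False
        then have xI: "x \<in> I" "x \<noteq> a" using x unfolding I'_def by auto
        have eq: "B \<union> (I' - {x}) = (B \<union> (I - {a, x})) \<union> {c}" unfolding I'_def using False by auto
        have nx: "x \<notin> acl (B \<union> (I - {a, x}))"
        proof
          assume "x \<in> acl (B \<union> (I - {a, x}))"
          moreover have "acl (B \<union> (I - {a, x})) \<subseteq> acl (B \<union> (I - {x}))" by (rule acl_mono) blast
          ultimately show False using less.prems(4) xI(1) unfolding indep_def by blast
        qed
        show ?thesis
        proof
          assume "x \<in> acl (B \<union> (I' - {x}))"
          then have "x \<in> acl ((B \<union> (I - {a, x})) \<union> {c})" using eq by simp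
          then have "c \<in> acl ((B \<union> (I - {a, x})) \<union> {x})" using nx by (rule acl_exchange)
          moreover have "(B \<union> (I - {a, x})) \<union> {x} = B \<union> (I - {a})" using xI by auto
          ultimately show False using c(3) by simp
        qed
      qed
    qed
    have "I' - C = (I - C) - {a}" unfolding I'_def using c(1) by auto
    moreover have "card (I - C - {a}) < card (I - C)"
      using less.prems(2) a by (intro card_Diff1_less) auto
    ultimately have "card (I' - C) < n" using less.prems(1) by simp
    then have "card I' \<le> card C" using less.IH fin' less.prems(3) ind' sub' by blast
    moreover have "card I' = card I" unfolding I'_def using a(1) c(2) less.prems(2)
      by (simp add: card_insert_disjoint card_Diff1_less) (metis One_nat_def Suc_pred card_gt_0_iff empty_iff)
    ultimately show ?thesis by simp
  qed
qed

lemma steinitz: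
  "finite I \<Longrightarrow> finite C \<Longrightarrow> indep B I \<Longrightarrow> I \<subseteq> acl (B \<union> C) \<Longrightarrow> card I \<le> card C"
  using steinitz_aux by blast

lemma indep_empty: "indep B {}" by (simp add: indep_def)

lemma indep_insert:
  assumes I: "indep B I" and x: "x \<notin> acl (B \<union> I)"
  shows "indep B (insert x I)"
proof -
  have xI: "x \<notin> I" using x acl_base by blast
  show ?thesis unfolding indep_def
  proof
    fix y assume y: "y \<in> insert x I"
    show "y \<notin> acl (B \<union> (insert x I - {y}))"
    proof (cases "y = x")
      case True
      then have "insert x I - {y} = I" using xI by auto
      then show ?thesis using x True by simp
    next
      case False
      then have yI: "y \<in> I" using y by simp
      have ny: "y \<notin> acl (B \<union> (I - {y}))" using I yI unfolding indep_def by blast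
      show ?thesis
      proof
        assume "y \<in> acl (B \<union> (insert x I - {y}))"
        moreover have "B \<union> (insert x I - {y}) = (B \<union> (I - {y})) \<union> {x}" using False by auto
        ultimately have "y \<in> acl ((B \<union> (I - {y})) \<union> {x})" by simp
        then have "x \<in> acl ((B \<union> (I - {y})) \<union> {y})" using ny by (rule acl_exchange)
        moreover have "(B \<union> (I - {y})) \<union> {y} = B \<union> I" using yI by auto
        ultimately show False using x by simp
      qed
    qed
  qed
qed

lemma exists_indep:
  assumes "countable B"
  shows "\<exists>I. finite I \<and> card I = n \<and> indep B I"
proof (induction n)
  case 0 then show ?case using indep_empty by (intro exI[of _ "{}"]) simp
next
  case (Suc n)
  then obtain I where I: "finite I" "card I = n" "indep B I" by blast
  have "countable (B \<union> I)" using assms I(1) by (simp add: countable_finite)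
  then obtain x where x: "x \<notin> acl (B \<union> I)" using exists_generic by blast
  then have "x \<notin> I" using acl_base by blast
  then show ?case using I x indep_insert by (intro exI[of _ "insert x I"]) simp
qed

lemma indep_subset: "indep B I \<Longrightarrow> J \<subseteq> I \<Longrightarrow> indep B J"
  unfolding indep_def using acl_mono by (meson Diff_mono Un_mono order_refl subset_iff)

lemma sg_sub_acl: "S \<subseteq> acl T \<Longrightarrow> subfield_gen S \<subseteq> acl T"
  using sg_mono[of S "acl T"] sg_acl[of T] by blast

lemma dim_lemma:
  assumes J: "finite J" "card J \<le> 1" and ys: "set ys \<subseteq> acl (B \<union> J)"
  shows "tuple_dim_le B ys 1"
proof (cases "set ys \<subseteq> acl B")
  case True
  then show ?thesis unfolding tuple_dim_le_def by (intro exI[of _ "{}"]) simp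
next
  case False
  then obtain u where u: "u \<in> set ys" "u \<notin> acl B" by blast
  have "J \<noteq> {}"
  proof
    assume "J = {}"
    then show False using False ys by simp
  qed
  then have "card J = 1" using J by (simp add: card_gt_0_iff le_antisym Suc_le_eq)
  then obtain w where w: "J = {w}" by (rule card_1_singletonE)
  have "u \<in> acl (B \<union> {w})" using u(1) ys w by blast
  then have "w \<in> acl (B \<union> {u})" using u(2) by (rule acl_exchange)
  then have "B \<union> {w} \<subseteq> acl (B \<union> {u})" using acl_base[of "B \<union> {u}"] by blast
  then have "acl (B \<union> {w}) \<subseteq> acl (B \<union> {u})" by (rule acl_trans)
  then have "set ys \<subseteq> acl (B \<union> {u})" using ys w by blast
  then show ?thesis unfolding tuple_dim_le_def using u(1) by (intro exI[of _ "{u}"]) simp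
qed

lemma dim_witness:
  assumes "tuple_dim_le A x 1"
  obtains J where "finite J" "card J \<le> 1" "set x \<subseteq> acl (A \<union> J)"
proof -
  obtain J where "J \<subseteq> set x" "card J \<le> 1" "set x \<subseteq> acl (A \<union> J)"
    using assms unfolding tuple_dim_le_def by blast
  moreover have "finite J" using \<open>J \<subseteq> set x\<close> finite_subset by blast
  ultimately show ?thesis using that by blast
qed

definition lin :: "(nat \<Rightarrow> complex) \<Rightarrow> nat \<Rightarrow> nat \<Rightarrow> complex list \<Rightarrow> complex" where
  "lin f k ofs x = (\<Sum>j<k. f (ofs + j) * x ! j)"

lemma solve_coord:
  fixes k :: nat
  assumes p: "p < k" and s: "(\<Sum>j<k. c j * d j) = 0" and dp: "d p \<noteq> 0"
    and cS: "\<And>j. j < k \<Longrightarrow> j \<noteq> p \<Longrightarrow> c j \<in> subfield_gen S"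
    and dS: "\<And>j. j < k \<Longrightarrow> d j \<in> subfield_gen S"
  shows "c p \<in> subfield_gen S"
proof -
  have "(\<Sum>j<k. c j * d j) = c p * d p + (\<Sum>j\<in>{..<k}-{p}. c j * d j)"
    using p by (subst sum.remove[of _ p]) auto
  then have "c p = - (\<Sum>j\<in>{..<k}-{p}. c j * d j) / d p"
    using s dp by (simp add: field_simps add_eq_0_iff)
  moreover have "(\<Sum>j\<in>{..<k}-{p}. c j * d j) \<in> subfield_gen S"
    using cS dS by (intro sg_sum subfield_gen.mul) auto
  ultimately show ?thesis using dS[OF p] by (auto intro: sg_divide subfield_gen.neg)
qed

lemma bad_elim:
  assumes lx: "length x = k" and ly: "length y = k" and xy: "x \<noteq> y"
    and e1: "lin f k ofs x = lin f k ofs y" and e2: "lin f k (ofs + k) x = lin f k (ofs + k) y"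
    and Jx: "set x \<subseteq> acl (A \<union> Jx)" and Jy: "set y \<subseteq> acl (A \<union> Jy)"
  shows "\<exists>p<k. {f (ofs + p), f (ofs + k + p)} \<subseteq>
     acl (A \<union> (f ` ({ofs..<ofs + 2 * k} - {ofs + p, ofs + k + p}) \<union> Jx \<union> Jy))"
proof -
  obtain p where p: "p < k" "x ! p \<noteq> y ! p" using lx ly xy nth_equalityI by metis
  define T where "T = A \<union> (f ` ({ofs..<ofs + 2 * k} - {ofs + p, ofs + k + p}) \<union> Jx \<union> Jy)"
  define S where "S = f ` ({ofs..<ofs + 2 * k} - {ofs + p, ofs + k + p}) \<union> set x \<union> set y"
  have "set x \<subseteq> acl T" using Jx acl_mono[of "A \<union> Jx" T] unfolding T_def by blast
  moreover have "set y \<subseteq> acl T" using Jy acl_mono[of "A \<union> Jy" T] unfolding T_def by blast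
  moreover have "f ` ({ofs..<ofs + 2 * k} - {ofs + p, ofs + k + p}) \<subseteq> acl T"
    using acl_base[of T] unfolding T_def by blast
  ultimately have SA: "subfield_gen S \<subseteq> acl T" unfolding S_def by (intro sg_sub_acl) blast
  define d where "d j = x ! j - y ! j" for j
  have dS: "d j \<in> subfield_gen S" if "j < k" for j
    unfolding d_def S_def using that lx ly
    by (intro sg_diff subfield_gen.base) auto
  have s1: "(\<Sum>j<k. f (ofs + j) * d j) = 0"
    using e1 unfolding lin_def d_def by (simp add: right_diff_distrib sum_subtractf)
  have s2: "(\<Sum>j<k. f (ofs + k + j) * d j) = 0"
    using e2 unfolding lin_def d_def by (simp add: right_diff_distrib sum_subtractf add.assoc)
  have "f (ofs + p) \<in> subfield_gen S"
  proof (rule solve_coord[OF p(1) s1])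
    show "d p \<noteq> 0" using p unfolding d_def by simp
    show "f (ofs + j) \<in> subfield_gen S" if "j < k" "j \<noteq> p" for j
    proof -
      have "ofs + j \<in> {ofs..<ofs + 2 * k} - {ofs + p, ofs + k + p}" using that p(1) by auto
      then have "f (ofs + j) \<in> S" unfolding S_def by blast
      then show ?thesis by (rule subfield_gen.base)
    qed
  qed (rule dS)
  moreover have "f (ofs + k + p) \<in> subfield_gen S"
  proof (rule solve_coord[OF p(1) s2])
    show "d p \<noteq> 0" using p unfolding d_def by simp
    show "f (ofs + k + j) \<in> subfield_gen S" if "j < k" "j \<noteq> p" for j
    proof -
      have "ofs + k + j \<in> {ofs..<ofs + 2 * k} - {ofs + p, ofs + k + p}" using that p(1) by auto
      then have "f (ofs + k + j) \<in> S" unfolding S_def by blast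
      then show ?thesis by (rule subfield_gen.base)
    qed
  qed (rule dS)
  ultimately have "{f (ofs + p), f (ofs + k + p)} \<subseteq> acl T" using SA by blast
  then show ?thesis using p(1) unfolding T_def by blast
qed

lemma card_two_removed:
  fixes a :: nat assumes "p < k"
  shows "card ({a..<a + 2 * k} - {a + p, a + k + p}) = 2 * k - 2"
proof -
  have "{a + p, a + k + p} \<subseteq> {a..<a + 2 * k}" using assms by auto
  moreover have "card {a + p, a + k + p} = 2" using assms by auto
  ultimately show ?thesis by (simp add: card_Diff_subset)
qed

lemma no_double_bad:
  fixes f :: "nat \<Rightarrow> complex" and k :: nat
  assumes k: "k \<ge> 1" and inj: "inj_on f {..<4*k}" and ind: "indep A (f ` {..<4*k})"
    and lx: "length x = k" and ly: "length y = k" and lz: "length z = k"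
    and xy: "x \<noteq> y" and xz: "x \<noteq> z"
    and dx: "tuple_dim_le A x 1" and dy: "tuple_dim_le A y 1" and dz: "tuple_dim_le A z 1"
    and e1: "lin f k 0 x = lin f k 0 y" and e2: "lin f k (0 + k) x = lin f k (0 + k) y"
    and e3: "lin f k (2*k) x = lin f k (2*k) z" and e4: "lin f k (2*k + k) x = lin f k (2*k + k) z"
  shows False
proof -
  obtain Jx where Jx: "finite Jx" "card Jx \<le> 1" "set x \<subseteq> acl (A \<union> Jx)" using dx by (rule dim_witness)
  obtain Jy where Jy: "finite Jy" "card Jy \<le> 1" "set y \<subseteq> acl (A \<union> Jy)" using dy by (rule dim_witness)
  obtain Jz where Jz: "finite Jz" "card Jz \<le> 1" "set z \<subseteq> acl (A \<union> Jz)" using dz by (rule dim_witness)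
  obtain p where p: "p < k" "{f (0 + p), f (0 + k + p)} \<subseteq>
     acl (A \<union> (f ` ({0..<0 + 2 * k} - {0 + p, 0 + k + p}) \<union> Jx \<union> Jy))"
    using bad_elim[OF lx ly xy e1 e2 Jx(3) Jy(3)] by blast
  obtain q where q: "q < k" "{f (2*k + q), f (2*k + k + q)} \<subseteq>
     acl (A \<union> (f ` ({2*k..<2*k + 2 * k} - {2*k + q, 2*k + k + q}) \<union> Jx \<union> Jz))"
    using bad_elim[OF lx lz xz e3 e4 Jx(3) Jz(3)] by blast
  define S1 where "S1 = {0..<0 + 2 * k} - {0 + p, 0 + k + p}"
  define S2 where "S2 = {2*k..<2*k + 2 * k} - {2*k + q, 2*k + k + q}"
  define C where "C = f ` S1 \<union> f ` S2 \<union> Jx \<union> Jy \<union> Jz"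
  have finC: "finite C" unfolding C_def S1_def S2_def using Jx Jy Jz by auto
  have cS1: "card S1 = 2 * k - 2" unfolding S1_def by (rule card_two_removed[OF p(1)])
  have cS2: "card S2 = 2 * k - 2" unfolding S2_def by (rule card_two_removed[OF q(1)])
  have "card C \<le> card (f ` S1) + card (f ` S2) + card Jx + card Jy + card Jz"
    unfolding C_def by (meson add_le_mono card_Un_le le_trans order_refl)
  also have "\<dots> \<le> card S1 + card S2 + 1 + 1 + 1"
    using card_image_le[of S1 f] card_image_le[of S2 f] Jx Jy Jz unfolding S1_def S2_def by fastforce
  finally have cC: "card C < 4 * k" using cS1 cS2 k by simp
  have AC1: "acl (A \<union> (f ` S1 \<union> Jx \<union> Jy)) \<subseteq> acl (A \<union> C)" unfolding C_def by (rule acl_mono) blast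
  have AC2: "acl (A \<union> (f ` S2 \<union> Jx \<union> Jz)) \<subseteq> acl (A \<union> C)" unfolding C_def by (rule acl_mono) blast
  have CC: "C \<subseteq> acl (A \<union> C)" using acl_base[of "A \<union> C"] by blast
  have sub: "f ` {..<4*k} \<subseteq> acl (A \<union> C)"
  proof
    fix u assume "u \<in> f ` {..<4*k}"
    then obtain i where i: "i < 4 * k" "u = f i" by blast
    consider "i \<in> {p, k + p}" | "i \<in> {2*k + q, 2*k + k + q}" | "i \<in> S1" | "i \<in> S2"
      unfolding S1_def S2_def using i(1) by fastforce
    then show "u \<in> acl (A \<union> C)"
    proof cases
      case 1 then show ?thesis using p(2) AC1 i(2) unfolding S1_def by auto
    next
      case 2 then show ?thesis using q(2) AC2 i(2) unfolding S2_def by auto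
    next
      case 3 then show ?thesis using CC i(2) unfolding C_def by blast
    next
      case 4 then show ?thesis using CC i(2) unfolding C_def by blast
    qed
  qed
  have "card (f ` {..<4*k}) \<le> card C"
    using steinitz[OF _ finC ind sub] by simp
  moreover have "card (f ` {..<4*k}) = 4 * k" using inj by (simp add: card_image)
  ultimately show False using cC by simp
qed

primrec trn :: "(nat \<Rightarrow> nat) \<Rightarrow> fterm \<Rightarrow> fterm" where
  "trn r (FVar i) = FVar (r i)"
| "trn r (FConst c) = FConst c"
| "trn r (FAdd s t) = FAdd (trn r s) (trn r t)"
| "trn r (FMul s t) = FMul (trn r s) (trn r t)"

primrec frn :: "(nat \<Rightarrow> nat) \<Rightarrow> ffml \<Rightarrow> ffml" where
  "frn r (FEq s t) = FEq (trn r s) (trn r t)"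
| "frn r (FNot p) = FNot (frn r p)"
| "frn r (FAnd p q) = FAnd (frn r p) (frn r q)"
| "frn r (FEx n p) = FEx (r n) (frn r p)"

lemma teval_trn: "teval e (trn r t) = teval (e \<circ> r) t"
  by (induction t) auto

lemma tparams_trn: "tparams (trn r t) = tparams t"
  by (induction t) auto

lemma fparams_frn: "fparams (frn r p) = fparams p"
  by (induction p) (auto simp: tparams_trn)

lemma fsat_frn: "inj r \<Longrightarrow> fsat e (frn r p) = fsat (e \<circ> r) p"
proof (induction p arbitrary: e)
  case (FEx n p)
  have "\<And>a. (e(r n := a)) \<circ> r = (e \<circ> r)(n := a)"
    using FEx.prems by (auto simp: fun_eq_iff inj_eq)
  then show ?case using FEx by (simp add: comp_def)
qed (auto simp: teval_trn)

definition fdef :: "complex set \<Rightarrow> ((nat \<Rightarrow> complex) \<Rightarrow> bool) \<Rightarrow> bool" where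
  "fdef B Q \<longleftrightarrow> (\<exists>\<phi>. fparams \<phi> \<subseteq> B \<and> (\<forall>e. fsat e \<phi> = Q e))"

lemma fdef_fsat: "fparams \<phi> \<subseteq> B \<Longrightarrow> fdef B (\<lambda>e. fsat e \<phi>)"
  unfolding fdef_def by blast

lemma fdef_and: "fdef B P \<Longrightarrow> fdef B Q \<Longrightarrow> fdef B (\<lambda>e. P e \<and> Q e)"
  unfolding fdef_def by (metis Un_least fparams.simps(3) fsat.simps(3))

lemma fdef_not: "fdef B P \<Longrightarrow> fdef B (\<lambda>e. \<not> P e)"
  unfolding fdef_def by (metis fparams.simps(2) fsat.simps(2))

lemma fdef_cong: "fdef B P \<Longrightarrow> (\<And>e. P e = Q e) \<Longrightarrow> fdef B Q"
  unfolding fdef_def by simp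

lemma fdef_rename: "fdef B P \<Longrightarrow> inj r \<Longrightarrow> fdef B (\<lambda>e. P (e \<circ> r))"
  unfolding fdef_def by (metis fparams_frn fsat_frn)

lemma fdef_eq_var: "fdef B (\<lambda>e. e v = e w)"
  unfolding fdef_def by (rule exI[of _ "FEq (FVar v) (FVar w)"]) simp

primrec lsum :: "(nat \<Rightarrow> complex) \<Rightarrow> (nat \<Rightarrow> nat) \<Rightarrow> nat \<Rightarrow> fterm" where
  "lsum c w 0 = FConst 0"
| "lsum c w (Suc n) = FAdd (lsum c w n) (FMul (FConst (c n)) (FVar (w n)))"

lemma teval_lsum: "teval e (lsum c w n) = (\<Sum>j<n. c j * e (w j))"
  by (induction n) auto

lemma tparams_lsum: "tparams (lsum c w n) \<subseteq> insert 0 (c ` {..<n})"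
  by (induction n) auto

lemma fdef_lin:
  fixes n :: nat
  assumes "0 \<in> B" "c ` {..<n} \<subseteq> B"
  shows "fdef B (\<lambda>e. e v = (\<Sum>j<n. c j * e (w j)))"
  unfolding fdef_def
  by (rule exI[of _ "FEq (FVar v) (lsum c w n)"]) (use assms tparams_lsum[of c w n] in \<open>auto simp: teval_lsum; blast\<close>)

primrec fconjl :: "ffml list \<Rightarrow> ffml" where
  "fconjl [] = FEq (FVar 0) (FVar 0)"
| "fconjl (p # ps) = FAnd p (fconjl ps)"

lemma fsat_fconjl: "fsat e (fconjl ps) = (\<forall>p\<in>set ps. fsat e p)"
  by (induction ps) auto

lemma fparams_fconjl: "fparams (fconjl ps) = (\<Union>p\<in>set ps. fparams p)"
  by (induction ps) auto

lemma fdef_all: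
  fixes n :: nat
  assumes "\<And>i. i < n \<Longrightarrow> fdef B (P i)"
  shows "fdef B (\<lambda>e. \<forall>i<n. P i e)"
proof -
  have "\<forall>i\<in>{..<n}. \<exists>\<phi>. fparams \<phi> \<subseteq> B \<and> (\<forall>e. fsat e \<phi> = P i e)"
    using assms unfolding fdef_def by blast
  then obtain \<Phi> where \<Phi>: "\<And>i. i \<in> {..<n} \<Longrightarrow> fparams (\<Phi> i) \<subseteq> B \<and> (\<forall>e. fsat e (\<Phi> i) = P i e)"
    by metis
  show ?thesis unfolding fdef_def
    by (rule exI[of _ "fconjl (map \<Phi> [0..<n])"])
       (use \<Phi> in \<open>auto simp: fsat_fconjl fparams_fconjl; blast\<close>)
qed

definition exl :: "nat list \<Rightarrow> ffml \<Rightarrow> ffml" where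
  "exl vs p = foldr FEx vs p"

lemma fparams_exl: "fparams (exl vs p) = fparams p"
  unfolding exl_def by (induction vs) auto

definition envu :: "nat set \<Rightarrow> (nat \<Rightarrow> complex) \<Rightarrow> (nat \<Rightarrow> complex) \<Rightarrow> nat \<Rightarrow> complex" where
  "envu V g e = (\<lambda>v. if v \<in> V then g v else e v)"

lemma fsat_exl: "fsat e (exl vs p) = (\<exists>g. fsat (envu (set vs) g e) p)"
proof (induction vs arbitrary: e)
  case Nil then show ?case by (simp add: exl_def envu_def)
next
  case (Cons v vs)
  have "fsat e (exl (v # vs) p) = (\<exists>a g. fsat (envu (set vs) g (e(v := a))) p)"
    using Cons by (simp add: exl_def fun_upd_def)
  also have "\<dots> = (\<exists>g. fsat (envu (set (v # vs)) g e) p)"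
  proof
    assume "\<exists>a g. fsat (envu (set vs) g (e(v := a))) p"
    then obtain a g where h: "fsat (envu (set vs) g (e(v := a))) p" by blast
    have "envu (set vs) g (e(v := a)) = envu (set (v # vs)) (g(v := if v \<in> set vs then g v else a)) e"
      by (auto simp: envu_def fun_eq_iff)
    then show "\<exists>g. fsat (envu (set (v # vs)) g e) p" using h by metis
  next
    assume "\<exists>g. fsat (envu (set (v # vs)) g e) p"
    then obtain g where h: "fsat (envu (set (v # vs)) g e) p" by blast
    have "envu (set (v # vs)) g e = envu (set vs) g (e(v := g v))"
      by (auto simp: envu_def fun_eq_iff)
    then show "\<exists>a g. fsat (envu (set vs) g (e(v := a))) p" using h by metis
  qed
  finally show ?case .
qed

lemma fdef_exl: "fdef B P \<Longrightarrow> fdef B (\<lambda>e. \<exists>g. P (envu (set vs) g e))"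
  unfolding fdef_def by (metis fparams_exl fsat_exl)

lemma fdef_mono: "fdef B P \<Longrightarrow> B \<subseteq> B' \<Longrightarrow> fdef B' P"
  unfolding fdef_def by blast

lemma fdef_to_fdo:
  assumes "fdef B Q"
  shows "field_definable_over B n {l. length l = n \<and> Q (tuple_env l)}"
  using assms unfolding fdef_def field_definable_over_def by auto

definition VV :: "nat \<Rightarrow> nat set" where
  "VV k = set (map (\<lambda>j. 2*j+3) [0..<k] @ map (\<lambda>j. 2*j+4) [0..<k])"

lemma VV_mem: "j < k \<Longrightarrow> 2*j+3 \<in> VV k" "j < k \<Longrightarrow> 2*j+4 \<in> VV k"
  by (auto simp: VV_def)

lemma VV_bound: "v \<in> VV k \<Longrightarrow> 3 \<le> v \<and> v < 2*k+3"
  by (auto simp: VV_def)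

lemma envu_low: "v < 3 \<Longrightarrow> envu (VV k) g e v = e v"
  using VV_bound[of v k] by (auto simp: envu_def)

lemma envu_in: "j < k \<Longrightarrow> envu (VV k) g e (2*j+3) = g (2*j+3)" "j < k \<Longrightarrow> envu (VV k) g e (2*j+4) = g (2*j+4)"
  using VV_mem by (auto simp: envu_def)

lemma envu_copy:
  assumes e: "\<And>v. v \<ge> 3 \<Longrightarrow> e v = 0" and ofs: "ofs = 3 \<or> ofs = 4"
  shows "envu (VV k) g e \<circ> (\<lambda>j. 2*j + ofs) = tuple_env (map (\<lambda>j. g (2*j+ofs)) [0..<k])"
proof
  fix j
  show "(envu (VV k) g e \<circ> (\<lambda>j. 2*j + ofs)) j = tuple_env (map (\<lambda>j. g (2*j+ofs)) [0..<k]) j"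
  proof (cases "j < k")
    case True
    then show ?thesis using ofs envu_in[OF True] by (auto simp: tuple_env_def)
  next
    case False
    then have "2*j + ofs \<notin> VV k" using VV_bound ofs by force
    then show ?thesis using False e ofs by (auto simp: tuple_env_def envu_def)
  qed
qed

lemma tuple_env_high: "length l \<le> 3 \<Longrightarrow> v \<ge> 3 \<Longrightarrow> tuple_env l v = 0"
  by (simp add: tuple_env_def)

lemma inj_lin_map: "inj (\<lambda>j::nat. 2*j + ofs)"
  by (auto simp: inj_def)

definition gg :: "complex list \<Rightarrow> complex list \<Rightarrow> nat \<Rightarrow> complex" where
  "gg x y v = (if odd v then x ! ((v - 3) div 2) else y ! ((v - 4) div 2))"

lemma gg_x: "length x = k \<Longrightarrow> map (\<lambda>j. gg x y (2*j+3)) [0..<k] = x"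
  by (rule nth_equalityI) (auto simp: gg_def)

lemma gg_y: "length y = k \<Longrightarrow> map (\<lambda>j. gg x y (2*j+4)) [0..<k] = y"
  by (rule nth_equalityI) (auto simp: gg_def)

lemma gg_x_nth: "gg x y (2*j+3) = x ! j" and gg_y_nth: "gg x y (2*j+4) = y ! j"
  by (auto simp: gg_def)

lemma sum_cong_lt: "(\<And>j. j < k \<Longrightarrow> a j = b j) \<Longrightarrow> (\<Sum>j<(k::nat). c j * a j) = (\<Sum>j<k. c j * b j)"
  by (rule sum.cong) auto

locale cset =
  fixes k :: nat and A :: "complex set" and \<phi> :: ffml and XX :: "complex list set" and f :: "nat \<Rightarrow> complex"
  assumes k: "k \<ge> 1" and finA: "finite A" and params: "fparams \<phi> \<subseteq> A"
    and XX: "XX = {xs. length xs = k \<and> fsat (tuple_env xs) \<phi>}"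
    and dims: "\<And>xs. xs \<in> XX \<Longrightarrow> tuple_dim_le A xs 1"
    and inj: "inj_on f {..<4*k}" and ind: "indep A (f ` {..<4*k})"
begin

definition BB :: "complex set" where "BB = A \<union> f ` {..<4*k} \<union> {0}"

definition c1 :: "nat \<Rightarrow> complex list \<Rightarrow> complex" where "c1 t x = lin f k (2*t*k) x"
definition c2 :: "nat \<Rightarrow> complex list \<Rightarrow> complex" where "c2 t x = lin f k (2*t*k + k) x"

definition RR :: "nat \<Rightarrow> nat \<Rightarrow> complex list set" where
  "RR t i = {l. \<exists>x\<in>XX. l = [c1 t x, c2 t x, x ! i]}"

definition Bad :: "nat \<Rightarrow> complex list set" where
  "Bad t = {l. \<exists>x\<in>XX. \<exists>y\<in>XX. x \<noteq> y \<and> c1 t x = c1 t y \<and> c2 t x = c2 t y \<and> l = [c1 t x, c2 t x]}"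

lemma finBB: "finite BB" unfolding BB_def using finA by simp

lemma lenX: "x \<in> XX \<Longrightarrow> length x = k" using XX by simp

lemma code_acl:
  assumes x: "x \<in> XX" and J: "set x \<subseteq> acl (A \<union> J)" and t: "t \<le> 1"
  shows "c1 t x \<in> acl (BB \<union> J)" "c2 t x \<in> acl (BB \<union> J)"
proof -
  let ?S = "f ` {..<4*k} \<union> set x"
  have "f ` {..<4*k} \<subseteq> acl (BB \<union> J)" using acl_base[of "BB \<union> J"] unfolding BB_def by blast
  moreover have "set x \<subseteq> acl (BB \<union> J)" using J acl_mono[of "A \<union> J" "BB \<union> J"] unfolding BB_def by blast
  ultimately have S: "subfield_gen ?S \<subseteq> acl (BB \<union> J)" by (intro sg_sub_acl) blast
  have lx: "length x = k" using lenX[OF x] .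
  have "lin f k ofs x \<in> subfield_gen ?S" if "ofs + k \<le> 4 * k" for ofs
    unfolding lin_def
  proof (rule sg_sum)
    fix j assume j: "j \<in> {..<k}"
    have "f (ofs + j) \<in> ?S" using j that by auto
    moreover have "x ! j \<in> ?S" using j lx by auto
    ultimately show "f (ofs + j) * x ! j \<in> subfield_gen ?S" by (intro subfield_gen.mul subfield_gen.base)
  qed
  moreover have "2*t*k + k \<le> 4 * k" "2*t*k + k + k \<le> 4 * k" using t by (auto simp: le_Suc_eq)
  ultimately show "c1 t x \<in> acl (BB \<union> J)" "c2 t x \<in> acl (BB \<union> J)"
    unfolding c1_def c2_def using S by (meson le_trans add_le_mono1 le_add1 subsetD)+
qed

lemma setx_acl: "set x \<subseteq> acl (A \<union> J) \<Longrightarrow> set x \<subseteq> acl (BB \<union> J)"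
  using acl_mono[of "A \<union> J" "BB \<union> J"] unfolding BB_def by blast

lemma RR_dim: "t \<le> 1 \<Longrightarrow> i < k \<Longrightarrow> l \<in> RR t i \<Longrightarrow> tuple_dim_le BB l 1"
proof -
  assume t: "t \<le> 1" and i: "i < k" and "l \<in> RR t i"
  then obtain x where x: "x \<in> XX" "l = [c1 t x, c2 t x, x ! i]" unfolding RR_def by blast
  obtain J where J: "finite J" "card J \<le> 1" "set x \<subseteq> acl (A \<union> J)" using dims[OF x(1)] by (rule dim_witness)
  have "x ! i \<in> set x" using i lenX[OF x(1)] by simp
  then have "x ! i \<in> acl (BB \<union> J)" using setx_acl[OF J(3)] by blast
  then have "set l \<subseteq> acl (BB \<union> J)" using x(2) code_acl[OF x(1) J(3) t] by simp
  then show ?thesis using J(1,2) by (rule dim_lemma[rotated 2])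
qed

lemma Bad_dim: "t \<le> 1 \<Longrightarrow> l \<in> Bad t \<Longrightarrow> tuple_dim_le BB l 1"
proof -
  assume t: "t \<le> 1" and "l \<in> Bad t"
  then obtain x where x: "x \<in> XX" "l = [c1 t x, c2 t x]" unfolding Bad_def by blast
  obtain J where J: "finite J" "card J \<le> 1" "set x \<subseteq> acl (A \<union> J)" using dims[OF x(1)] by (rule dim_witness)
  have "set l \<subseteq> acl (BB \<union> J)" using x(2) code_acl[OF x(1) J(3) t] by simp
  then show ?thesis using J(1,2) by (rule dim_lemma[rotated 2])
qed

end

lemma list3: "length l = 3 \<Longrightarrow> l = [l!0, l!1, l!2]"
proof -
  assume "length l = 3"
  then obtain a b c where "l = [a, b, c]" by (metis length_0_conv length_Suc_conv numeral_3_eq_3)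
  then show ?thesis by simp
qed

lemma list2: "length l = 2 \<Longrightarrow> l = [l!0, l!1]"
proof -
  assume "length l = 2"
  then obtain a b where "l = [a, b]" by (metis length_0_conv length_Suc_conv numeral_2_eq_2)
  then show ?thesis by simp
qed

context cset
begin

lemma params_BB: "fparams \<phi> \<subseteq> BB" using params unfolding BB_def by blast
lemma zero_BB: "0 \<in> BB" unfolding BB_def by blast
lemma f_BB: "t \<le> 1 \<Longrightarrow> (\<lambda>j. f (2*t*k + j)) ` {..<k} \<subseteq> BB" "t \<le> 1 \<Longrightarrow> (\<lambda>j. f (2*t*k + k + j)) ` {..<k} \<subseteq> BB"
  unfolding BB_def by (auto simp: le_Suc_eq)

lemma fdef_copy: "ofs = 3 \<or> ofs = 4 \<Longrightarrow> fdef BB (\<lambda>E. fsat (E \<circ> (\<lambda>j. 2*j + ofs)) \<phi>)"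
  using fdef_rename[OF fdef_fsat[OF params_BB] inj_lin_map] by blast

definition bodyR :: "nat \<Rightarrow> nat \<Rightarrow> (nat \<Rightarrow> complex) \<Rightarrow> bool" where
  "bodyR t i E \<longleftrightarrow> fsat (E \<circ> (\<lambda>j. 2*j + 3)) \<phi> \<and>
     E 0 = (\<Sum>j<k. f (2*t*k + j) * E (2*j+3)) \<and> E 1 = (\<Sum>j<k. f (2*t*k + k + j) * E (2*j+3)) \<and>
     E 2 = E (2*i+3)"

lemma fdef_bodyR: "t \<le> 1 \<Longrightarrow> fdef BB (bodyR t i)"
  unfolding bodyR_def
  by (intro fdef_and fdef_copy fdef_eq_var fdef_lin[OF zero_BB] f_BB) auto

definition QR :: "nat \<Rightarrow> nat \<Rightarrow> (nat \<Rightarrow> complex) \<Rightarrow> bool" where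
  "QR t i e \<longleftrightarrow> (\<exists>g. bodyR t i (envu (VV k) g e))"

lemma fdef_QR: "t \<le> 1 \<Longrightarrow> fdef BB (QR t i)"
  unfolding QR_def VV_def by (rule fdef_exl[OF fdef_bodyR])

lemma lin_env:
  assumes "\<And>j. j < k \<Longrightarrow> E (2*j+ofs) = x ! j"
  shows "(\<Sum>j<k. c j * E (2*j+ofs)) = (\<Sum>j<k. c j * x ! j)"
  using assms by (intro sum_cong_lt) auto

lemma RR_eq:
  assumes t: "t \<le> 1" and i: "i < k"
  shows "RR t i = {l. length l = 3 \<and> QR t i (tuple_env l)}"
proof (intro equalityI subsetI)
  fix l assume "l \<in> RR t i"
  then obtain x where x: "x \<in> XX" "l = [c1 t x, c2 t x, x ! i]" unfolding RR_def by blast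
  have lx: "length x = k" using lenX[OF x(1)] .
  let ?E = "envu (VV k) (gg x x) (tuple_env l)"
  have e0: "\<And>v. v \<ge> 3 \<Longrightarrow> tuple_env l v = 0" using x(2) by (simp add: tuple_env_def)
  have cp: "?E \<circ> (\<lambda>j. 2*j + 3) = tuple_env x"
    using envu_copy[of "tuple_env l" 3 k "gg x x", OF e0] gg_x[OF lx] by simp
  have Ej: "\<And>j. j < k \<Longrightarrow> ?E (2*j+3) = x ! j" using envu_in gg_x_nth by simp
  have "bodyR t i ?E" unfolding bodyR_def
  proof (intro conjI)
    show "fsat (?E \<circ> (\<lambda>j. 2*j + 3)) \<phi>" using cp x(1) XX by simp
    show "?E 0 = (\<Sum>j<k. f (2*t*k + j) * ?E (2*j+3))"
      using lin_env[of ?E 3 x, OF Ej] envu_low[of 0] x(2) by (simp add: c1_def lin_def tuple_env_def)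
    show "?E 1 = (\<Sum>j<k. f (2*t*k + k + j) * ?E (2*j+3))"
      using lin_env[of ?E 3 x, OF Ej] envu_low[of 1] x(2) by (simp add: c2_def lin_def tuple_env_def add.assoc)
    show "?E 2 = ?E (2*i+3)"
      using Ej[OF i] envu_low[of 2] x(2) by (simp add: tuple_env_def)
  qed
  then show "l \<in> {l. length l = 3 \<and> QR t i (tuple_env l)}" unfolding QR_def using x(2) by auto
next
  fix l assume "l \<in> {l. length l = 3 \<and> QR t i (tuple_env l)}"
  then obtain g where l3: "length l = 3" and b: "bodyR t i (envu (VV k) g (tuple_env l))"
    unfolding QR_def by blast
  let ?E = "envu (VV k) g (tuple_env l)"
  define x where "x = map (\<lambda>j. g (2*j+3)) [0..<k]"
  have lx: "length x = k" unfolding x_def by simp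
  have e0: "\<And>v. v \<ge> 3 \<Longrightarrow> tuple_env l v = 0" using l3 by (simp add: tuple_env_def)
  have cp: "?E \<circ> (\<lambda>j. 2*j + 3) = tuple_env x"
    using envu_copy[of "tuple_env l" 3 k g, OF e0] unfolding x_def by simp
  have Ej: "\<And>j. j < k \<Longrightarrow> ?E (2*j+3) = x ! j" using envu_in unfolding x_def by simp
  have xX: "x \<in> XX" using b cp lx XX unfolding bodyR_def by simp
  have "l ! 0 = c1 t x"
    using b lin_env[of ?E 3 x, OF Ej] envu_low[of 0] l3
    unfolding bodyR_def c1_def lin_def by (simp add: tuple_env_def)
  moreover have "l ! 1 = c2 t x"
    using b lin_env[of ?E 3 x, OF Ej] envu_low[of 1] l3
    unfolding bodyR_def c2_def lin_def by (simp add: tuple_env_def add.assoc)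
  moreover have "l ! 2 = x ! i"
    using b Ej[OF i] envu_low[of 2] l3 unfolding bodyR_def by (simp add: tuple_env_def)
  ultimately have "l = [c1 t x, c2 t x, x ! i]" using list3[OF l3] by simp
  then show "l \<in> RR t i" unfolding RR_def using xX by blast
qed

end

context cset
begin

definition bodyB :: "nat \<Rightarrow> (nat \<Rightarrow> complex) \<Rightarrow> bool" where
  "bodyB t E \<longleftrightarrow> fsat (E \<circ> (\<lambda>j. 2*j + 3)) \<phi> \<and> fsat (E \<circ> (\<lambda>j. 2*j + 4)) \<phi> \<and>
     \<not> (\<forall>j<k. E (2*j+3) = E (2*j+4)) \<and>
     E 0 = (\<Sum>j<k. f (2*t*k + j) * E (2*j+3)) \<and> E 0 = (\<Sum>j<k. f (2*t*k + j) * E (2*j+4)) \<and>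
     E 1 = (\<Sum>j<k. f (2*t*k + k + j) * E (2*j+3)) \<and> E 1 = (\<Sum>j<k. f (2*t*k + k + j) * E (2*j+4))"

lemma fdef_bodyB: "t \<le> 1 \<Longrightarrow> fdef BB (bodyB t)"
  unfolding bodyB_def
  by (intro fdef_and fdef_not fdef_all fdef_copy fdef_eq_var fdef_lin[OF zero_BB] f_BB) auto

definition QB :: "nat \<Rightarrow> (nat \<Rightarrow> complex) \<Rightarrow> bool" where
  "QB t e \<longleftrightarrow> (\<exists>g. bodyB t (envu (VV k) g e))"

lemma fdef_QB: "t \<le> 1 \<Longrightarrow> fdef BB (QB t)"
  unfolding QB_def VV_def by (rule fdef_exl[OF fdef_bodyB])

lemma Bad_eq:
  assumes t: "t \<le> 1"
  shows "Bad t = {l. length l = 2 \<and> QB t (tuple_env l)}"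
proof (intro equalityI subsetI)
  fix l assume "l \<in> Bad t"
  then obtain x y where xy: "x \<in> XX" "y \<in> XX" "x \<noteq> y" "c1 t x = c1 t y" "c2 t x = c2 t y"
    "l = [c1 t x, c2 t x]" unfolding Bad_def by blast
  have lx: "length x = k" using lenX[OF xy(1)] .
  have ly: "length y = k" using lenX[OF xy(2)] .
  let ?E = "envu (VV k) (gg x y) (tuple_env l)"
  have e0: "\<And>v. v \<ge> 3 \<Longrightarrow> tuple_env l v = 0" using xy(6) by (simp add: tuple_env_def)
  have cp3: "?E \<circ> (\<lambda>j. 2*j + 3) = tuple_env x"
    using envu_copy[of "tuple_env l" 3 k "gg x y", OF e0] gg_x[OF lx] by simp
  have cp4: "?E \<circ> (\<lambda>j. 2*j + 4) = tuple_env y"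
    using envu_copy[of "tuple_env l" 4 k "gg x y", OF e0] gg_y[OF ly] by simp
  have Ej3: "\<And>j. j < k \<Longrightarrow> ?E (2*j+3) = x ! j" using envu_in gg_x_nth by simp
  have Ej4: "\<And>j. j < k \<Longrightarrow> ?E (2*j+4) = y ! j" using envu_in gg_y_nth by simp
  have "bodyB t ?E" unfolding bodyB_def
  proof (intro conjI)
    show "fsat (?E \<circ> (\<lambda>j. 2*j + 3)) \<phi>" using cp3 xy(1) XX by simp
    show "fsat (?E \<circ> (\<lambda>j. 2*j + 4)) \<phi>" using cp4 xy(2) XX by simp
    show "\<not> (\<forall>j<k. ?E (2*j+3) = ?E (2*j+4))"
    proof
      assume "\<forall>j<k. ?E (2*j+3) = ?E (2*j+4)"
      then have "\<forall>j<k. x ! j = y ! j" using Ej3 Ej4 by simp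
      then show False using xy(3) lx ly nth_equalityI by metis
    qed
    have E0: "?E 0 = c1 t x" using envu_low[of 0] xy(6) by (simp add: tuple_env_def)
    have E1: "?E 1 = c2 t x" using envu_low[of 1] xy(6) by (simp add: tuple_env_def)
    have S3: "(\<Sum>j<k. f (2*t*k + j) * ?E (2*j+3)) = c1 t x"
      using lin_env[of ?E 3 x, OF Ej3] by (simp add: c1_def lin_def)
    have S4: "(\<Sum>j<k. f (2*t*k + j) * ?E (2*j+4)) = c1 t y"
      using lin_env[of ?E 4 y, OF Ej4] by (simp add: c1_def lin_def)
    have T3: "(\<Sum>j<k. f (2*t*k + k + j) * ?E (2*j+3)) = c2 t x"
      using lin_env[of ?E 3 x, OF Ej3] by (simp add: c2_def lin_def add.assoc)
    have T4: "(\<Sum>j<k. f (2*t*k + k + j) * ?E (2*j+4)) = c2 t y"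
      using lin_env[of ?E 4 y, OF Ej4] by (simp add: c2_def lin_def add.assoc)
    show "?E 0 = (\<Sum>j<k. f (2*t*k + j) * ?E (2*j+3))" using E0 S3 by simp
    show "?E 0 = (\<Sum>j<k. f (2*t*k + j) * ?E (2*j+4))" using E0 S4 xy(4) by simp
    show "?E 1 = (\<Sum>j<k. f (2*t*k + k + j) * ?E (2*j+3))" using E1 T3 by simp
    show "?E 1 = (\<Sum>j<k. f (2*t*k + k + j) * ?E (2*j+4))" using E1 T4 xy(5) by simp
  qed
  then show "l \<in> {l. length l = 2 \<and> QB t (tuple_env l)}" unfolding QB_def using xy(6) by auto
next
  fix l assume "l \<in> {l. length l = 2 \<and> QB t (tuple_env l)}"
  then obtain g where l2: "length l = 2" and b: "bodyB t (envu (VV k) g (tuple_env l))"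
    unfolding QB_def by blast
  let ?E = "envu (VV k) g (tuple_env l)"
  define x where "x = map (\<lambda>j. g (2*j+3)) [0..<k]"
  define y where "y = map (\<lambda>j. g (2*j+4)) [0..<k]"
  have lx: "length x = k" unfolding x_def by simp
  have ly: "length y = k" unfolding y_def by simp
  have e0: "\<And>v. v \<ge> 3 \<Longrightarrow> tuple_env l v = 0" using l2 by (simp add: tuple_env_def)
  have cp3: "?E \<circ> (\<lambda>j. 2*j + 3) = tuple_env x"
    using envu_copy[of "tuple_env l" 3 k g, OF e0] unfolding x_def by simp
  have cp4: "?E \<circ> (\<lambda>j. 2*j + 4) = tuple_env y"
    using envu_copy[of "tuple_env l" 4 k g, OF e0] unfolding y_def by simp
  have Ej3: "\<And>j. j < k \<Longrightarrow> ?E (2*j+3) = x ! j" using envu_in unfolding x_def by simp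
  have Ej4: "\<And>j. j < k \<Longrightarrow> ?E (2*j+4) = y ! j" using envu_in unfolding y_def by simp
  have xX: "x \<in> XX" using b cp3 lx XX unfolding bodyB_def by simp
  have yX: "y \<in> XX" using b cp4 ly XX unfolding bodyB_def by simp
  have "x \<noteq> y"
  proof
    assume "x = y"
    then have "\<forall>j<k. ?E (2*j+3) = ?E (2*j+4)" using Ej3 Ej4 by simp
    then show False using b unfolding bodyB_def by blast
  qed
  have E0: "?E 0 = l ! 0" using envu_low[of 0] l2 by (simp add: tuple_env_def)
  have E1: "?E 1 = l ! 1" using envu_low[of 1] l2 by (simp add: tuple_env_def)
  have S3: "(\<Sum>j<k. f (2*t*k + j) * ?E (2*j+3)) = c1 t x"
    using lin_env[of ?E 3 x, OF Ej3] by (simp add: c1_def lin_def)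
  have S4: "(\<Sum>j<k. f (2*t*k + j) * ?E (2*j+4)) = c1 t y"
    using lin_env[of ?E 4 y, OF Ej4] by (simp add: c1_def lin_def)
  have T3: "(\<Sum>j<k. f (2*t*k + k + j) * ?E (2*j+3)) = c2 t x"
    using lin_env[of ?E 3 x, OF Ej3] by (simp add: c2_def lin_def add.assoc)
  have T4: "(\<Sum>j<k. f (2*t*k + k + j) * ?E (2*j+4)) = c2 t y"
    using lin_env[of ?E 4 y, OF Ej4] by (simp add: c2_def lin_def add.assoc)
  have bb: "?E 0 = (\<Sum>j<k. f (2*t*k + j) * ?E (2*j+3))" "?E 0 = (\<Sum>j<k. f (2*t*k + j) * ?E (2*j+4))"
     "?E 1 = (\<Sum>j<k. f (2*t*k + k + j) * ?E (2*j+3))" "?E 1 = (\<Sum>j<k. f (2*t*k + k + j) * ?E (2*j+4))"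
    using b unfolding bodyB_def by blast+
  have "l ! 0 = c1 t x" using bb(1) E0 S3 by simp
  moreover have "l ! 0 = c1 t y" using bb(2) E0 S4 by simp
  moreover have "l ! 1 = c2 t x" using bb(3) E1 T3 by simp
  moreover have "l ! 1 = c2 t y" using bb(4) E1 T4 by simp
  ultimately show "l \<in> Bad t" unfolding Bad_def using xX yX \<open>x \<noteq> y\<close> list2[OF l2]
    by (intro CollectI bexI[of _ x] bexI[of _ y]) auto
qed

lemma basic_RR: "t \<le> 1 \<Longrightarrow> i < k \<Longrightarrow> basic_rel 3 (RR t i)"
  unfolding basic_rel_def
  using finBB RR_dim fdef_to_fdo[OF fdef_QR, of t 3] RR_eq by (intro exI[of _ BB]) auto

lemma basic_Bad: "t \<le> 1 \<Longrightarrow> basic_rel 2 (Bad t)"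
  unfolding basic_rel_def
  using finBB Bad_dim fdef_to_fdo[OF fdef_QB, of t 2] Bad_eq by (intro exI[of _ BB]) auto

end

context cset
begin

definition badc :: "nat \<Rightarrow> complex list \<Rightarrow> bool" where
  "badc t x \<longleftrightarrow> (\<exists>y\<in>XX. y \<noteq> x \<and> c1 t y = c1 t x \<and> c2 t y = c2 t x)"

lemma not_both_bad:
  assumes x: "x \<in> XX" and b0: "badc 0 x" and b1: "badc 1 x"
  shows False
proof -
  obtain y where y: "y \<in> XX" "y \<noteq> x" "c1 0 y = c1 0 x" "c2 0 y = c2 0 x" using b0 unfolding badc_def by blast
  obtain z where z: "z \<in> XX" "z \<noteq> x" "c1 1 z = c1 1 x" "c2 1 z = c2 1 x" using b1 unfolding badc_def by blast
  have e1: "lin f k 0 x = lin f k 0 y" using y(3) unfolding c1_def by simp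
  have e2: "lin f k (0 + k) x = lin f k (0 + k) y" using y(4) unfolding c2_def by simp
  have e3: "lin f k (2*k) x = lin f k (2*k) z" using z(3) unfolding c1_def by simp
  have e4: "lin f k (2*k + k) x = lin f k (2*k + k) z" using z(4) unfolding c2_def by simp
  show False
    using no_double_bad[OF k inj ind lenX[OF x] lenX[OF y(1)] lenX[OF z(1)] y(2)[symmetric] z(2)[symmetric]
        dims[OF x] dims[OF y(1)] dims[OF z(1)] e1 e2 e3 e4] .
qed

lemma sem:
  assumes ly: "length ys = k"
  shows "ys \<in> XX \<longleftrightarrow> (\<exists>t\<le>1. \<exists>a b. (\<forall>i<k. [a, b, ys ! i] \<in> RR t i) \<and> [a, b] \<notin> Bad t)"
proof
  assume ys: "ys \<in> XX"
  obtain t where t: "t \<le> 1" "\<not> badc t ys" using not_both_bad[OF ys] by (metis le_refl zero_le_one)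
  have "\<forall>i<k. [c1 t ys, c2 t ys, ys ! i] \<in> RR t i" using ys unfolding RR_def by blast
  moreover have "[c1 t ys, c2 t ys] \<notin> Bad t"
  proof
    assume "[c1 t ys, c2 t ys] \<in> Bad t"
    then obtain x y where xy: "x \<in> XX" "y \<in> XX" "x \<noteq> y" "c1 t x = c1 t y" "c2 t x = c2 t y"
      "c1 t ys = c1 t x" "c2 t ys = c2 t x" unfolding Bad_def by auto
    show False
    proof (cases "x = ys")
      case True
      then have "y \<noteq> ys" using xy(3) by simp
      then show False using t(2) xy unfolding badc_def by metis
    next
      case False
      then show False using t(2) xy unfolding badc_def by metis
    qed
  qed
  ultimately show "\<exists>t\<le>1. \<exists>a b. (\<forall>i<k. [a, b, ys ! i] \<in> RR t i) \<and> [a, b] \<notin> Bad t"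
    using t(1) by blast
next
  assume "\<exists>t\<le>1. \<exists>a b. (\<forall>i<k. [a, b, ys ! i] \<in> RR t i) \<and> [a, b] \<notin> Bad t"
  then obtain t a b where R: "\<forall>i<k. [a, b, ys ! i] \<in> RR t i" and nB: "[a, b] \<notin> Bad t" by blast
  have "\<forall>i\<in>{..<k}. \<exists>x\<in>XX. [a, b, ys ! i] = [c1 t x, c2 t x, x ! i]" using R unfolding RR_def by blast
  then obtain xs where xs: "\<And>i. i \<in> {..<k} \<Longrightarrow> xs i \<in> XX \<and> a = c1 t (xs i) \<and> b = c2 t (xs i) \<and> ys ! i = xs i ! i"
    by (metis list.inject)
  have k0: "0 \<in> {..<k}" using k by simp
  have same: "xs i = xs 0" if i: "i \<in> {..<k}" for i
  proof (rule ccontr)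
    assume "xs i \<noteq> xs 0"
    then have "[a, b] \<in> Bad t" unfolding Bad_def using xs[OF i] xs[OF k0]
      by (intro CollectI bexI[of _ "xs i"] bexI[of _ "xs 0"]) auto
    then show False using nB by simp
  qed
  have "ys = xs 0"
  proof (rule nth_equalityI)
    show "length ys = length (xs 0)" using ly lenX xs[OF k0] by simp
    show "ys ! i = xs 0 ! i" if "i < length ys" for i
      using that ly xs[of i] same[of i] by simp
  qed
  then show "ys \<in> XX" using xs[OF k0] by simp
qed

end

primrec rconj :: "complex list set rfml list \<Rightarrow> complex list set rfml" where
  "rconj [] = REq 0 0"
| "rconj (p # ps) = RAnd p (rconj ps)"

lemma rsat_rconj: "rsat e (rconj ps) = (\<forall>p\<in>set ps. rsat e p)"
  by (induction ps) auto

lemma rsyms_rconj: "rsyms (rconj ps) = (\<Union>p\<in>set ps. rsyms p)"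
  by (induction ps) auto

lemma rsat_rconj_map: "rsat e (rconj (map (\<lambda>i. RRel (R i) (ws i)) [0..<k])) = (\<forall>i<k. map e (ws i) \<in> R i)"
  by (auto simp: rsat_rconj)

definition good :: "complex list set \<Rightarrow> nat list \<Rightarrow> complex list set rfml \<Rightarrow> bool" where
  "good S vs \<theta> \<longleftrightarrow> rsyms \<theta> \<subseteq> C3_rels \<and> (\<forall>e. rsat e \<theta> = (map e vs \<in> S))"

definition thT :: "(nat \<Rightarrow> complex list set) \<Rightarrow> complex list set \<Rightarrow> nat \<Rightarrow> nat list \<Rightarrow> nat \<Rightarrow> complex list set rfml" where
  "thT R B k vs m = REx m (REx (Suc m) (RAnd (rconj (map (\<lambda>i. RRel (R i) [m, Suc m, vs ! i]) [0..<k]))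
      (RNot (RRel B [m, Suc m]))))"

lemma rsat_thT:
  assumes fresh: "\<And>v. v \<in> set vs \<Longrightarrow> v < m" and len: "length vs = k"
  shows "rsat e (thT R B k vs m) = (\<exists>a b. (\<forall>i<k. [a, b, map e vs ! i] \<in> R i) \<and> [a, b] \<notin> B)"
proof -
  have "(e(m := a, Suc m := b)) (vs ! i) = e (vs ! i)" if "i < k" for a b i
  proof -
    have "vs ! i < m" using fresh[OF nth_mem] that len by simp
    then show ?thesis by simp
  qed
  then show ?thesis unfolding thT_def using len by (simp add: rsat_rconj_map del: upt_Suc)
qed

lemma rsyms_thT: "rsyms (thT R B k vs m) = R ` {..<k} \<union> {B}"
  unfolding thT_def by (auto simp: rsyms_rconj)

lemma C3_mem: "basic_rel n S \<Longrightarrow> n \<le> 3 \<Longrightarrow> S \<in> C3_rels"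
  unfolding C3_rels_def by blast

lemma fdo_len: "field_definable_over A k S \<Longrightarrow> xs \<in> S \<Longrightarrow> length xs = k"
  unfolding field_definable_over_def by auto

lemma exists_good:
  assumes S: "basic_rel k S"
  shows "\<exists>\<theta>. good S vs \<theta>"
proof (cases "k \<le> 3")
  case True
  then show ?thesis using C3_mem[OF S] unfolding good_def by (intro exI[of _ "RRel S vs"]) auto
next
  case False
  then have k: "k \<ge> 1" by simp
  obtain A where A: "finite A" "field_definable_over A k S" "\<And>xs. xs \<in> S \<Longrightarrow> tuple_dim_le A xs 1"
    using S unfolding basic_rel_def by blast
  obtain \<phi> where \<phi>: "fparams \<phi> \<subseteq> A" "S = {xs. length xs = k \<and> fsat (tuple_env xs) \<phi>}"
    using A(2) unfolding field_definable_over_def by blast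
  obtain I where I: "finite I" "card I = 4 * k" "indep A I"
    using exists_indep[of A "4 * k"] A(1) countable_finite by blast
  obtain f where f: "bij_betw f {0..<card I} I" using ex_bij_betw_nat_finite[OF I(1)] by blast
  have inj: "inj_on f {..<4*k}" and img: "f ` {..<4*k} = I"
    using f I(2) unfolding bij_betw_def by (auto simp: lessThan_atLeast0)
  interpret cset k A \<phi> S f
    using k A(1) \<phi> A(3) inj I(3) img by unfold_locales auto
  show ?thesis
  proof (cases "length vs = k")
    case False
    have "\<forall>e. \<not> rsat e (RNot (REq 0 0))" by simp
    moreover have "\<forall>e. map e vs \<notin> S" using False \<phi>(2) by auto
    ultimately show ?thesis unfolding good_def by (intro exI[of _ "RNot (REq 0 0)"]) auto
  next
    case True
    define m where "m = Suc (Max (insert 0 (set vs)))"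
    have fresh: "\<And>v. v \<in> set vs \<Longrightarrow> v < m" unfolding m_def by (simp add: le_imp_less_Suc)
    define \<theta> where "\<theta> = RNot (RAnd (RNot (thT (RR 0) (Bad 0) k vs m)) (RNot (thT (RR 1) (Bad 1) k vs m)))"
    have semth: "rsat e \<theta> = (map e vs \<in> S)" for e
    proof -
      let ?P = "\<lambda>t. \<exists>a b. (\<forall>i<k. [a, b, map e vs ! i] \<in> RR t i) \<and> [a, b] \<notin> Bad t"
      have "rsat e \<theta> = (?P 0 \<or> ?P 1)"
        unfolding \<theta>_def using rsat_thT[OF fresh True] by simp
      also have "\<dots> = (\<exists>t\<le>1. ?P t)"
      proof
        assume "?P 0 \<or> ?P 1" then show "\<exists>t\<le>1. ?P t" by (metis le_refl zero_le_one)
      next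
        assume "\<exists>t\<le>1. ?P t"
        then obtain t where "t \<le> 1" "?P t" by blast
        then show "?P 0 \<or> ?P 1" by (cases t) auto
      qed
      finally have "rsat e \<theta> = (\<exists>t\<le>1. \<exists>a b. (\<forall>i<k. [a, b, map e vs ! i] \<in> RR t i) \<and> [a, b] \<notin> Bad t)" .
      also have "\<dots> = (map e vs \<in> S)" using sem[of "map e vs"] True by simp
      finally show ?thesis .
    qed
    have R3: "RR t i \<in> C3_rels" if "t \<le> 1" "i < k" for t i by (rule C3_mem[OF basic_RR[OF that]]) simp
    have B3: "Bad t \<in> C3_rels" if "t \<le> 1" for t by (rule C3_mem[OF basic_Bad[OF that]]) simp
    have "rsyms \<theta> \<subseteq> C3_rels"
      unfolding \<theta>_def using R3 B3 by (auto simp: rsyms_thT)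
    then show ?thesis using semth unfolding good_def by blast
  qed
qed

primrec tr :: "complex list set rfml \<Rightarrow> complex list set rfml" where
  "tr (REq i j) = REq i j"
| "tr (RRel S vs) = (SOME \<theta>. good S vs \<theta>)"
| "tr (RNot p) = RNot (tr p)"
| "tr (RAnd p q) = RAnd (tr p) (tr q)"
| "tr (REx n p) = REx n (tr p)"

lemma tr_correct: "rsyms \<phi> \<subseteq> C_rels \<Longrightarrow> rsyms (tr \<phi>) \<subseteq> C3_rels \<and> (\<forall>e. rsat e (tr \<phi>) = rsat e \<phi>)"
proof (induction \<phi>)
  case (RRel S vs)
  then obtain k where "basic_rel k S" unfolding C_rels_def by auto
  then have "good S vs (SOME \<theta>. good S vs \<theta>)" using exists_good someI_ex by metis
  then show ?case by (simp add: good_def)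
qed auto

no_notation Polynomials.var (\<open>X\<index>\<close>)

theorem proposition6p1:
  shows "\<forall>m X. struct_definable C3_rels m X \<longleftrightarrow> struct_definable C_rels m X"
proof (intro allI iffI)
  fix m X
  assume "struct_definable C3_rels m X"
  moreover have "C3_rels \<subseteq> C_rels" unfolding C3_rels_def C_rels_def by blast
  ultimately show "struct_definable C_rels m X" unfolding struct_definable_def by blast
next
  fix m X
  assume "struct_definable C_rels m X"
  then obtain \<phi> where \<phi>: "rsyms \<phi> \<subseteq> C_rels" "X = {xs. length xs = m \<and> rsat (tuple_env xs) \<phi>}"
    unfolding struct_definable_def by blast
  show "struct_definable C3_rels m X" unfolding struct_definable_def
    using tr_correct[OF \<phi>(1)] \<phi>(2) by (intro exI[of _ "tr \<phi>"]) auto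
qed

end
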